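(* Consider the system \[ \begin{aligned} \dot S_h(t)&=\beta_h-C_{vh}\frac{I_v(t)}{N_v(t)}S_h(t)-\mu_hS_h(t),\\ \dot I_h(t)&=C_{vh}\frac{I_v(t-\tau)}{N_v(t-\tau)}S_h(t-\tau)-\mu_hI_h(t),\\ \dot S_v(t)&=\beta_v-C_{hv}I_h(t)S_v(t)-\mu_vS_v(t),\\ \dot I_v(t)&=C_{hv}I_h(t)S_v(t)-\mu_vI_v(t), \end{aligned} \] with $N_v=S_v+I_v$ and positive parameters $\beta_h,\beta_v,\mu_h,\mu_v,C_{vh},C_{hv}$. Let $E^0=(\beta_h/\mu_h,0,\beta_v/\mu_v,0)^T$ be its disease-free equilibrium and $R_0=\sqrt{C_{vh}C_{hv}\beta_h/(\mu_h^2\mu_v)}$. Then for any $\tau\ge0$, $E^0$ is locally asymptotically stable if $R_0<1$ and unstable if $R_0>1$.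
   Context: The phase space is $C_+=\{\varphi\in C([-\tau,0],\mathbb{R}_+^4):\varphi_3(\theta)+\varphi_4(\theta)>0\ \forall\theta\in[-\tau,0]\}$ with the sup-norm. *)

theory Defs
  imports "HOL-Analysis.Analysis"
begin

text \<open>A solution of the delay system on [-tau, infinity) is given by four component functions.
  Its restriction to [-tau,0] is the initial history phi; the solution must be continuous
  on [-tau, infinity), keep N_v = S_v + I_v positive (so the right-hand side is defined), and
  satisfy the equations for t \<ge> 0 (right derivative at t = 0).\<close>

definition dde_solution ::
  "real \<Rightarrow> real \<Rightarrow> real \<Rightarrow> real \<Rightarrow> real \<Rightarrow> real \<Rightarrow> real \<Rightarrow>
   (real \<Rightarrow> real) \<Rightarrow> (real \<Rightarrow> real) \<Rightarrow> (real \<Rightarrow> real) \<Rightarrow> (real \<Rightarrow> real) \<Rightarrow> bool" where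
  "dde_solution bh bv mh mv cvh chv tau Sh Ih Sv Iv \<longleftrightarrow>
     continuous_on {-tau..} Sh \<and> continuous_on {-tau..} Ih \<and>
     continuous_on {-tau..} Sv \<and> continuous_on {-tau..} Iv \<and>
     (\<forall>t \<ge> -tau. Sv t + Iv t > 0) \<and>
     (\<forall>t \<ge> 0.
        (Sh has_real_derivative
           (bh - cvh * (Iv t / (Sv t + Iv t)) * Sh t - mh * Sh t)) (at t within {0..}) \<and>
        (Ih has_real_derivative
           (cvh * (Iv (t - tau) / (Sv (t - tau) + Iv (t - tau))) * Sh (t - tau) - mh * Ih t))
           (at t within {0..}) \<and>
        (Sv has_real_derivative (bv - chv * Ih t * Sv t - mv * Sv t)) (at t within {0..}) \<and>
        (Iv has_real_derivative (chv * Ih t * Sv t - mv * Iv t)) (at t within {0..}))"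

definition history_in_Cplus ::
  "real \<Rightarrow> (real \<Rightarrow> real) \<Rightarrow> (real \<Rightarrow> real) \<Rightarrow> (real \<Rightarrow> real) \<Rightarrow> (real \<Rightarrow> real) \<Rightarrow> bool" where
  "history_in_Cplus tau Sh Ih Sv Iv \<longleftrightarrow>
     (\<forall>\<theta>\<in>{-tau..0}. Sh \<theta> \<ge> 0 \<and> Ih \<theta> \<ge> 0 \<and> Sv \<theta> \<ge> 0 \<and> Iv \<theta> \<ge> 0 \<and> Sv \<theta> + Iv \<theta> > 0)"

definition dev ::
  "real \<Rightarrow> real \<Rightarrow> real \<Rightarrow> real \<Rightarrow>
   (real \<Rightarrow> real) \<Rightarrow> (real \<Rightarrow> real) \<Rightarrow> (real \<Rightarrow> real) \<Rightarrow> (real \<Rightarrow> real) \<Rightarrow> real \<Rightarrow> real" where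
  "dev bh bv mh mv Sh Ih Sv Iv t =
     max (max \<bar>Sh t - bh / mh\<bar> \<bar>Ih t\<bar>) (max \<bar>Sv t - bv / mv\<bar> \<bar>Iv t\<bar>)"

definition E0_stable ::
  "real \<Rightarrow> real \<Rightarrow> real \<Rightarrow> real \<Rightarrow> real \<Rightarrow> real \<Rightarrow> real \<Rightarrow> bool" where
  "E0_stable bh bv mh mv cvh chv tau \<longleftrightarrow>
     (\<forall>\<epsilon>>0. \<exists>\<delta>>0. \<forall>Sh Ih Sv Iv.
        dde_solution bh bv mh mv cvh chv tau Sh Ih Sv Iv \<and> history_in_Cplus tau Sh Ih Sv Iv \<and>
        (\<forall>\<theta>\<in>{-tau..0}. dev bh bv mh mv Sh Ih Sv Iv \<theta> < \<delta>)
        \<longrightarrow> (\<forall>t\<ge>0. dev bh bv mh mv Sh Ih Sv Iv t < \<epsilon>))"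

definition E0_attractive ::
  "real \<Rightarrow> real \<Rightarrow> real \<Rightarrow> real \<Rightarrow> real \<Rightarrow> real \<Rightarrow> real \<Rightarrow> bool" where
  "E0_attractive bh bv mh mv cvh chv tau \<longleftrightarrow>
     (\<exists>\<delta>>0. \<forall>Sh Ih Sv Iv.
        dde_solution bh bv mh mv cvh chv tau Sh Ih Sv Iv \<and> history_in_Cplus tau Sh Ih Sv Iv \<and>
        (\<forall>\<theta>\<in>{-tau..0}. dev bh bv mh mv Sh Ih Sv Iv \<theta> < \<delta>)
        \<longrightarrow> ((\<lambda>t. dev bh bv mh mv Sh Ih Sv Iv t) \<longlongrightarrow> 0) at_top)"

definition E0_LAS ::
  "real \<Rightarrow> real \<Rightarrow> real \<Rightarrow> real \<Rightarrow> real \<Rightarrow> real \<Rightarrow> real \<Rightarrow> bool" where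
  "E0_LAS bh bv mh mv cvh chv tau \<longleftrightarrow>
     E0_stable bh bv mh mv cvh chv tau \<and> E0_attractive bh bv mh mv cvh chv tau"

end

theory Submission
  imports Defs "HOL-Analysis.Analysis"
begin


lemma at_within_Ici_local:
  fixes a b t :: real
  assumes "a \<le> t" "t < b"
  shows "at t within {a..b} = at t within {a..}"
  by (rule at_within_nhd[of t "{..<b}"]) (use assms in auto)

lemma cont_on_Ici:
  fixes f :: "real \<Rightarrow> 'a::topological_space"
  assumes "\<And>T. continuous_on {a..T} f"
  shows "continuous_on {a..} f"
proof (subst continuous_on_eq_continuous_within, intro ballI)
  fix t assume t: "t \<in> {a..}"
  have "continuous (at t within {a..t+1}) f"
    using assms[of "t+1"] t by (simp add: continuous_on_eq_continuous_within)
  then show "continuous (at t within {a..}) f"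
    using at_within_Ici_local[of a t "t+1"] t by simp
qed

lemma int_deriv:
  fixes g :: "real \<Rightarrow> 'a::banach"
  assumes "continuous_on {a..} g" "a \<le> t"
  shows "((\<lambda>u. integral {a..u} g) has_vector_derivative g t) (at t within {a..})"
proof -
  have "continuous_on {a..t+1} g" using assms(1) by (rule continuous_on_subset) auto
  from integral_has_vector_derivative[OF this, of t] assms(2)
  show ?thesis using at_within_Ici_local[of a t "t+1"] by simp
qed

lemma int_cont:
  fixes g :: "real \<Rightarrow> 'a::banach"
  assumes "continuous_on {a..} g"
  shows "continuous_on {a..} (\<lambda>u. integral {a..u} g)"
  unfolding continuous_on_eq_continuous_within
  using int_deriv[OF assms] has_vector_derivative_continuous by blast

lemma int_power_bound:
  fixes K c :: real and n :: nat
  assumes "0 \<le> s"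
  shows "integral {0..s} (\<lambda>r. c * K * (c * r) ^ n / fact n) = K * (c * s) ^ Suc n / fact (Suc n)"
proof -
  have "((\<lambda>r. c * K * (c * r) ^ n / fact n) has_integral
          ((\<lambda>r. K * (c * r) ^ Suc n / fact (Suc n)) s - (\<lambda>r. K * (c * r) ^ Suc n / fact (Suc n)) 0)) {0..s}"
  proof (rule fundamental_theorem_of_calculus[OF assms])
    fix x assume "x \<in> {0..s}"
    have d: "((\<lambda>r. K * (c * r) ^ Suc n / fact (Suc n)) has_real_derivative
           K * (real (Suc n) * (c * x) ^ n * c) / fact (Suc n)) (at x within {0..s})"
      by (auto intro!: derivative_eq_intros simp del: power_Suc)
    have e: "K * (real (Suc n) * (c * x) ^ n * c) / fact (Suc n) = c * K * (c * x) ^ n / fact n"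
      by (simp add: fact_Suc field_simps del: of_nat_Suc)
    show "((\<lambda>r. K * (c * r) ^ Suc n / fact (Suc n)) has_vector_derivative
           c * K * (c * x) ^ n / fact n) (at x within {0..s})"
      using d unfolding e has_real_derivative_iff_has_vector_derivative .
  qed
  then have "((\<lambda>r. c * K * (c * r) ^ n / fact n) has_integral K * (c * s) ^ Suc n / fact (Suc n)) {0..s}"
    by simp
  then show ?thesis by (rule integral_unique)
qed

lemma dde_exist:
  fixes F :: "'a::euclidean_space \<Rightarrow> 'a \<Rightarrow> 'a" and phi :: "real \<Rightarrow> 'a"
  assumes tau: "tau \<ge> 0" and L: "L > 0"
    and Fc: "continuous_on UNIV (\<lambda>p. F (fst p) (snd p))"
    and FL: "\<And>x y x' y'. norm (F x y - F x' y') \<le> L * (norm (x - x') + norm (y - y'))"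
    and phic: "continuous_on {-tau..0} phi"
  shows "\<exists>x. continuous_on {-tau..} x \<and> (\<forall>t\<in>{-tau..0}. x t = phi t) \<and>
          (\<forall>t\<ge>0. (x has_vector_derivative F (x t) (x (t - tau))) (at t within {0..}))"
proof -
  define G where "G x s = F (x s) (x (s - tau))" for x :: "real \<Rightarrow> 'a" and s
  define P where "P x t = (if t \<le> 0 then phi t else phi 0 + integral {0..t} (G x))" for x t
  define X where "X n = (P ^^ n) (\<lambda>t. if t \<le> 0 then phi t else phi 0)" for n
  have Gc: "continuous_on {0..} (G x)" if "continuous_on {-tau..} x" for x
  proof -
    have c1: "continuous_on {0..} x" using that by (rule continuous_on_subset) (use tau in auto)
    have c2: "continuous_on {0..} (\<lambda>s. x (s - tau))"
      by (rule continuous_on_compose2[OF that]) (auto intro!: continuous_intros)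
    have "continuous_on {0..} (\<lambda>s. (x s, x (s - tau)))"
      using c1 c2 by (intro continuous_intros)
    from continuous_on_compose2[OF Fc this] show ?thesis by (simp add: G_def)
  qed
  have Pphi: "P x t = phi t" if "t \<le> 0" for x t using that by (simp add: P_def)
  have Pd: "(P x has_vector_derivative G x t) (at t within {0..})"
    if "continuous_on {-tau..} x" "t \<ge> 0" for x t
  proof -
    have "((\<lambda>u. phi 0 + integral {0..u} (G x)) has_vector_derivative 0 + G x t) (at t within {0..})"
      using has_vector_derivative_add[OF has_vector_derivative_const int_deriv[OF Gc[OF that(1)] that(2)]] .
    then have "((\<lambda>u. phi 0 + integral {0..u} (G x)) has_vector_derivative G x t) (at t within {0..})"
      by simp
    then show ?thesis
      by (rule has_vector_derivative_transform[rotated 2]) (use that in \<open>auto simp: P_def\<close>)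
  qed
  have Pc: "continuous_on {-tau..} (P x)" if "continuous_on {-tau..} x" for x
  proof -
    have "continuous_on ({-tau..0} \<union> {0..}) (\<lambda>t. if t \<le> 0 then phi t else phi 0 + integral {0..t} (G x))"
      apply (rule continuous_on_cases)
      using phic int_cont[OF Gc[OF that]] by (auto intro!: continuous_intros)
    moreover have "{-tau..0} \<union> {0..} = {-tau::real..}" using tau by auto
    ultimately show ?thesis by (simp add: P_def[abs_def])
  qed
  have X0c: "continuous_on {-tau..} (X 0)"
  proof -
    have "continuous_on ({-tau..0} \<union> {0..}) (\<lambda>t. if t \<le> 0 then phi t else phi 0)"
      apply (rule continuous_on_cases)
      using phic by (auto intro!: continuous_intros)
    moreover have "{-tau..0} \<union> {0..} = {-tau::real..}" using tau by auto
    ultimately show ?thesis by (simp add: X_def)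
  qed
  have XS: "X (Suc n) = P (X n)" for n by (simp add: X_def)
  have Xc: "continuous_on {-tau..} (X n)" for n
    by (induction n) (simp_all add: X0c XS Pc)
  have Xphi: "X n t = phi t" if "t \<le> 0" for n t
    using that by (cases n) (simp_all add: XS Pphi X_def)
  have Pest: "norm (P x t - P y t) \<le> integral {0..t} g"
    if "continuous_on {-tau..} x" "continuous_on {-tau..} y" "t \<ge> 0" "continuous_on {0..t} g"
       "\<And>s. s \<in> {0..t} \<Longrightarrow> norm (G x s - G y s) \<le> g s" for x y t and g :: "real \<Rightarrow> real"
  proof (cases "t = 0")
    case True then show ?thesis by (simp add: P_def)
  next
    case False
    have ix: "G x integrable_on {0..t}"
      by (rule integrable_continuous_interval, rule continuous_on_subset[OF Gc[OF that(1)]]) auto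
    have iy: "G y integrable_on {0..t}"
      by (rule integrable_continuous_interval, rule continuous_on_subset[OF Gc[OF that(2)]]) auto
    have ig: "g integrable_on {0..t}" by (rule integrable_continuous_interval[OF that(4)])
    have "P x t - P y t = integral {0..t} (\<lambda>s. G x s - G y s)"
      using False that(3) by (simp add: P_def integral_diff[OF ix iy])
    also have "norm \<dots> \<le> integral {0..t} g"
      by (rule integral_norm_bound_integral[OF integrable_diff[OF ix iy] ig that(5)])
    finally show ?thesis .
  qed
  have Xbound: "\<exists>K\<ge>0. \<forall>n. \<forall>s\<in>{-tau..T}. norm (X (Suc n) s - X n s) \<le> K * (2*L*max s 0)^n / fact n" for T
  proof -
    have "compact ((\<lambda>s. X 1 s - X 0 s) ` {-tau..T})"
      by (intro compact_continuous_image continuous_intros)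
        (auto intro: continuous_on_subset[OF Xc])
    then have "bounded ((\<lambda>s. X 1 s - X 0 s) ` {-tau..T})" by (rule compact_imp_bounded)
    then obtain K where K0: "K > 0" "\<forall>y\<in>(\<lambda>s. X 1 s - X 0 s) ` {-tau..T}. norm y \<le> K"
      unfolding bounded_pos by blast
    then have K: "K > 0" "\<forall>s\<in>{-tau..T}. norm (X 1 s - X 0 s) \<le> K" by auto
    have "\<forall>s\<in>{-tau..T}. norm (X (Suc n) s - X n s) \<le> K * (2*L*max s 0)^n / fact n" for n
    proof (induction n)
      case 0 then show ?case using K by simp
    next
      case (Suc n)
      show ?case
      proof
        fix s assume s: "s \<in> {-tau..T}"
        show "norm (X (Suc (Suc n)) s - X (Suc n) s) \<le> K * (2*L*max s 0)^Suc n / fact (Suc n)"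
        proof (cases "s \<le> 0")
          case True then show ?thesis using K L by (simp add: Xphi)
        next
          case False
          have "norm (X (Suc (Suc n)) s - X (Suc n) s) = norm (P (X (Suc n)) s - P (X n) s)"
            by (simp add: XS)
          also have "\<dots> \<le> integral {0..s} (\<lambda>r. (2*L) * K * ((2*L) * r)^n / fact n)"
          proof (rule Pest[OF Xc Xc])
            show "0 \<le> s" using False by simp
            show "continuous_on {0..s} (\<lambda>r. (2*L) * K * ((2*L) * r)^n / fact n)"
              by (intro continuous_intros) auto
            fix r assume r: "r \<in> {0..s}"
            have r1: "r \<in> {-tau..T}" "r - tau \<in> {-tau..T}" using r s tau by auto
            have "norm (G (X (Suc n)) r - G (X n) r) \<le> L * (norm (X (Suc n) r - X n r) + norm (X (Suc n) (r-tau) - X n (r-tau)))"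
              unfolding G_def by (rule FL)
            also have "\<dots> \<le> L * (K * (2*L*max r 0)^n / fact n + K * (2*L*max (r-tau) 0)^n / fact n)"
              using Suc.IH r1 L by (intro mult_left_mono add_mono) (blast, blast, simp)
            also have "\<dots> \<le> L * (K * (2*L*r)^n / fact n + K * (2*L*r)^n / fact n)"
              using r L K tau by (intro mult_left_mono add_mono divide_right_mono power_mono) auto
            also have "\<dots> = (2*L) * K * ((2*L) * r)^n / fact n" by (simp add: field_simps)
            finally show "norm (G (X (Suc n)) r - G (X n) r) \<le> (2*L) * K * ((2*L) * r)^n / fact n" .
          qed
          also have "\<dots> = K * (2*L * s)^Suc n / fact (Suc n)"
            using False by (intro int_power_bound) auto
          finally show ?thesis using False by simp
        qed
      qed
    qed
    with K show ?thesis by (intro exI[of _ K]) auto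
  qed
  define x where "x s = X 0 s + (\<Sum>i. X (Suc i) s - X i s)" for s
  have unif: "uniform_limit {-tau..T} X x sequentially" for T
  proof -
    obtain K where K: "K \<ge> 0" "\<forall>n. \<forall>s\<in>{-tau..T}. norm (X (Suc n) s - X n s) \<le> K * (2*L*max s 0)^n / fact n"
      using Xbound by blast
    have sm: "summable (\<lambda>n. K * (2*L*max T 0)^n / fact n)"
    proof -
      have "summable (\<lambda>n. (2*L*max T 0)^n /\<^sub>R fact n)" using exp_converges sums_summable by blast
      then have s1: "summable (\<lambda>n. K * ((2*L*max T 0)^n /\<^sub>R fact n))" by (rule summable_mult)
      have eqK: "(\<lambda>n. K * ((2*L*max T 0)^n /\<^sub>R fact n)) = (\<lambda>n. K * (2*L*max T 0)^n / fact n)"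
        by (rule ext) (simp add: divide_inverse mult.commute mult.left_commute)
      from s1 show ?thesis unfolding eqK .
    qed
    have "uniform_limit {-tau..T} (\<lambda>n s. \<Sum>i<n. X (Suc i) s - X i s) (\<lambda>s. \<Sum>i. X (Suc i) s - X i s) sequentially"
    proof (rule Weierstrass_m_test[OF _ sm])
      fix n s assume s: "s \<in> {-tau..T}"
      then have "norm (X (Suc n) s - X n s) \<le> K * (2*L*max s 0)^n / fact n" using K by auto
      also have "\<dots> \<le> K * (2*L*max T 0)^n / fact n" using K L s
        by (intro divide_right_mono mult_left_mono power_mono) auto
      finally show "norm (X (Suc n) s - X n s) \<le> K * (2*L*max T 0)^n / fact n" .
    qed
    then have "uniform_limit {-tau..T} (\<lambda>n s. X 0 s + (\<Sum>i<n. X (Suc i) s - X i s)) x sequentially"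
      unfolding x_def by (intro uniform_limit_add uniform_limit_const)
    moreover have eqX: "X 0 s + (\<Sum>i<n. X (Suc i) s - X i s) = X n s" for n s
      using sum_lessThan_telescope[of "\<lambda>i. X i s" n] by simp
    ultimately show ?thesis by (simp add: eqX)
  qed
  have xc: "continuous_on {-tau..} x"
  proof (rule cont_on_Ici, rule uniform_limit_theorem[OF _ unif])
    fix T
    have "continuous_on {-tau..T} (X n)" for n by (rule continuous_on_subset[OF Xc]) auto
    then show "\<forall>\<^sub>F n in sequentially. continuous_on {- tau..T} (X n)" by simp
  qed simp
  have xlim: "(\<lambda>n. X n s) \<longlonglongrightarrow> x s" if "s \<ge> -tau" for s
    using tendsto_uniform_limitI[OF unif[of s]] that by auto
  have xphi: "x t = phi t" if "t \<in> {-tau..0}" for t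
    using xlim[of t] Xphi[of t] that by (simp add: LIMSEQ_const_iff)
  have fixp: "x t = P x t" if "t \<ge> 0" for t
  proof -
    have "(\<lambda>n. P (X n) t) \<longlonglongrightarrow> P x t"
    proof (rule tendstoI)
      fix e :: real assume e: "e > 0"
      define e' where "e' = e / (2 * L * (t + 1))"
      have e': "e' > 0" using e L that by (simp add: e'_def)
      have "\<forall>\<^sub>F n in sequentially. \<forall>s\<in>{-tau..t}. dist (X n s) (x s) < e'"
        using unif[of t] e' unfolding uniform_limit_iff by blast
      then show "\<forall>\<^sub>F n in sequentially. dist (P (X n) t) (P x t) < e"
      proof eventually_elim
        case (elim n)
        have "norm (P (X n) t - P x t) \<le> integral {0..t} (\<lambda>r. 2 * L * e')"
        proof (rule Pest[OF Xc xc that])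
          show "continuous_on {0..t} (\<lambda>r. 2 * L * e')" by simp
          fix r assume r: "r \<in> {0..t}"
          have "r \<in> {-tau..t}" "r - tau \<in> {-tau..t}" using r tau by auto
          then have "norm (X n r - x r) < e'" "norm (X n (r-tau) - x (r-tau)) < e'"
            using elim by (auto simp: dist_norm)
          then have "L * (norm (X n r - x r) + norm (X n (r-tau) - x (r-tau))) \<le> L * (2 * e')"
            using L by (intro mult_left_mono) auto
          then show "norm (G (X n) r - G x r) \<le> 2 * L * e'"
            using FL[of "X n r" "X n (r - tau)" "x r" "x (r-tau)"] unfolding G_def by linarith
        qed
        also have "\<dots> = 2 * L * e' * t" using that by simp
        also have "\<dots> = e * (t / (t + 1))" using L that by (simp add: e'_def divide_simps)
        also have "\<dots> < e" using e that by (simp add: field_simps)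
        finally show ?case by (simp add: dist_norm)
      qed
    qed
    moreover have "(\<lambda>n. X (Suc n) t) \<longlonglongrightarrow> x t" using xlim[of t] that tau by (intro LIMSEQ_Suc) auto
    then have "(\<lambda>n. P (X n) t) \<longlonglongrightarrow> x t" by (simp add: XS)
    ultimately show ?thesis using LIMSEQ_unique by metis
  qed
  show ?thesis
  proof (intro exI conjI allI impI ballI)
    show "continuous_on {-tau..} x" by (rule xc)
    show "x t = phi t" if "t \<in> {-tau..0}" for t using xphi that .
    fix t :: real assume t: "t \<ge> 0"
    have "(P x has_vector_derivative G x t) (at t within {0..})" by (rule Pd[OF xc t])
    then have "(x has_vector_derivative G x t) (at t within {0..})"
      by (rule has_vector_derivative_transform[rotated 2]) (use t fixp in auto)
    then show "(x has_vector_derivative F (x t) (x (t - tau))) (at t within {0..})"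
      by (simp add: G_def)
  qed
qed



lemma deriv_hit:
  fixes g :: "real \<Rightarrow> real"
  assumes d: "(g has_real_derivative D) (at T within {0..})" and T: "T > 0" and D: "D < 0"
    and le: "\<forall>s. 0 \<le> s \<and> s < T \<longrightarrow> g s \<le> g T"
  shows False
proof -
  obtain d where d: "d > 0" "\<forall>h>0. T - h \<in> {0..} \<longrightarrow> h < d \<longrightarrow> g T < g (T - h)"
    using has_real_derivative_neg_dec_left[OF d D] by blast
  define h where "h = min d T / 2"
  have "h > 0" "T - h \<ge> 0" "h < d" "T - h < T" using d T by (auto simp: h_def)
  then have "g T < g (T - h)" using d by auto
  moreover have "g (T - h) \<le> g T" using le \<open>T - h \<ge> 0\<close> \<open>T - h < T\<close> by blast
  ultimately show False by simp
qed

lemma hit_up: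
  fixes u B :: "real \<Rightarrow> real"
  assumes "(u has_real_derivative Du) (at T within {0..})" "(B has_real_derivative DB) (at T within {0..})"
    "T > 0" "u T = B T" "\<forall>s. 0 \<le> s \<and> s < T \<longrightarrow> u s \<le> B s" "Du < DB"
  shows False
proof -
  have "((\<lambda>t. u t - B t) has_real_derivative Du - DB) (at T within {0..})"
    by (intro DERIV_diff assms(1,2))
  from deriv_hit[OF this] assms(3-6) show False by force
qed

lemma hit_low:
  fixes u B :: "real \<Rightarrow> real"
  assumes "(u has_real_derivative Du) (at T within {0..})" "(B has_real_derivative DB) (at T within {0..})"
    "T > 0" "u T = - B T" "\<forall>s. 0 \<le> s \<and> s < T \<longrightarrow> - B s \<le> u s" "- Du < DB"
  shows False
proof -
  have "((\<lambda>t. - u t - B t) has_real_derivative - Du - DB) (at T within {0..})"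
    by (intro DERIV_diff DERIV_minus assms(1,2))
  from deriv_hit[OF this] assms(3-6) show False by force
qed

lemma first_exit:
  fixes h :: "real \<Rightarrow> real"
  assumes a: "a \<le> 0" and cont: "continuous_on {a..} h"
    and init: "\<forall>t\<in>{a..0}. h t < 0"
    and step: "\<And>T. T > 0 \<Longrightarrow> h T = 0 \<Longrightarrow> (\<forall>s\<in>{a..<T}. h s < 0) \<Longrightarrow> False"
  shows "\<forall>t\<ge>a. h t < 0"
proof (rule ccontr)
  assume "\<not> ?thesis"
  then obtain t0 where t0: "t0 \<ge> a" "h t0 \<ge> 0" by force
  then have t0': "t0 > 0" using init by force
  define S where "S = {0..} \<inter> h -` {0..}"
  have "t0 \<in> S" using t0 t0' by (simp add: S_def)
  then have ne: "S \<noteq> {}" by auto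
  have cl: "closed S" unfolding S_def
    by (rule continuous_closed_preimage[OF continuous_on_subset[OF cont]]) (use a in auto)
  have bdd: "bdd_below S" by (rule bdd_belowI[of _ 0]) (auto simp: S_def)
  define T where "T = Inf S"
  have TS: "T \<in> S" unfolding T_def by (rule closed_contains_Inf[OF ne bdd cl])
  then have T0: "T \<ge> 0" "h T \<ge> 0" by (auto simp: S_def)
  have "h 0 < 0" using init a by auto
  then have Tpos: "T > 0" using T0 by (cases "T = 0") auto
  have before: "\<forall>s\<in>{a..<T}. h s < 0"
  proof
    fix s assume s: "s \<in> {a..<T}"
    show "h s < 0"
    proof (cases "s \<le> 0")
      case True then show ?thesis using init s by auto
    next
      case False
      show ?thesis
      proof (rule ccontr)
        assume "\<not> h s < 0"
        then have "s \<in> S" using False by (auto simp: S_def)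
        then have "T \<le> s" unfolding T_def by (rule cInf_lower[OF _ bdd])
        then show False using s by auto
      qed
    qed
  qed
  have "h T = 0"
  proof (rule ccontr)
    assume "h T \<noteq> 0"
    then have hT: "h T > 0" using T0 by simp
    have "T \<in> {a..}" using T0 a by auto
    then obtain d where d: "d > 0" "\<forall>x'\<in>{a..}. dist x' T < d \<longrightarrow> dist (h x') (h T) < h T"
      using cont hT unfolding continuous_on_iff by blast
    define s where "s = T - min d T / 2"
    have s: "s \<in> {a..<T}" "dist s T < d" using d Tpos a by (auto simp: s_def dist_real_def)
    then have "dist (h s) (h T) < h T" using d by auto
    moreover have "h s < 0" using before s by auto
    ultimately show False by (auto simp: dist_real_def)
  qed
  then show False using step[OF Tpos _ before] by simp
qed



lemma prod_bound:
  fixes x y n X Y Nl k Z :: real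
  assumes "\<bar>x\<bar> \<le> X" "\<bar>y\<bar> \<le> Y" "Nl \<le> n" "0 < Nl" "0 \<le> k" "k * X * Y < Z * Nl"
  shows "\<bar>k * (x / n) * y\<bar> < Z"
proof -
  have n: "n > 0" using assms by linarith
  have X: "X \<ge> 0" "Y \<ge> 0" using assms(1,2) by linarith+
  have "\<bar>k * (x / n) * y\<bar> = k * (\<bar>x\<bar> * \<bar>y\<bar>) / n" using assms n by (simp add: abs_mult)
  also have "\<dots> \<le> k * (X * Y) / n"
    using assms X n by (intro divide_right_mono mult_left_mono mult_mono) auto
  also have "\<dots> \<le> k * (X * Y) / Nl"
    using assms X n by (intro divide_left_mono mult_nonneg_nonneg mult_pos_pos) auto
  also have "\<dots> < Z" using assms(4,6) by (simp add: pos_divide_less_eq mult.assoc)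
  finally show ?thesis .
qed

lemma prod_bound2:
  fixes x y X Y k Z :: real
  assumes "\<bar>x\<bar> \<le> X" "\<bar>y\<bar> \<le> Y" "0 \<le> k" "k * X * Y < Z"
  shows "\<bar>k * x * y\<bar> < Z"
proof -
  have X: "X \<ge> 0" "Y \<ge> 0" using assms(1,2) by linarith+
  have "\<bar>k * x * y\<bar> = k * (\<bar>x\<bar> * \<bar>y\<bar>)" using assms by (simp add: abs_mult)
  also have "\<dots> \<le> k * (X * Y)"
    using assms X by (intro mult_left_mono mult_mono) auto
  also have "\<dots> < Z" using assms(4) by (simp add: mult.assoc)
  finally show ?thesis .
qed

lemma DERIV_E:
  fixes M al :: real
  shows "((\<lambda>t. M * exp (- al * t)) has_real_derivative (- al * (M * exp (- al * T)))) (at T within S)"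
  by (auto intro!: derivative_eq_intros simp: algebra_simps)

lemma stab_core:
  fixes bh bv mh mv cvh chv tau M al c :: real
  assumes pos: "bh > 0" "bv > 0" "mh > 0" "mv > 0" "cvh > 0" "chv > 0" "tau \<ge> 0"
    and M: "M > 0" and al: "al \<ge> 0" and c: "c > 0"
    and condN: "bv/mv - 2*c*(M*exp(al*tau)) > 0"
    and condA: "cvh * c * exp(al*tau) * (bh/mh + M*exp(al*tau)) < (mh - al) * (bv/mv - 2*c*(M*exp(al*tau)))"
    and condB: "chv * (bv/mv + c*(M*exp(al*tau))) < (mv - al) * c"
    and sol: "dde_solution bh bv mh mv cvh chv tau Sh Ih Sv Iv"
    and hist: "\<forall>\<theta>\<in>{-tau..0}. \<bar>Sh \<theta> - bh/mh\<bar> < M \<and> \<bar>Ih \<theta>\<bar> < M \<and> \<bar>Sv \<theta> - bv/mv\<bar> < c*M \<and> \<bar>Iv \<theta>\<bar> < c*M"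
  shows "\<forall>t\<ge>-tau. \<bar>Sh t - bh/mh\<bar> < M*exp(-al*t) \<and> \<bar>Ih t\<bar> < M*exp(-al*t) \<and>
            \<bar>Sv t - bv/mv\<bar> < c*(M*exp(-al*t)) \<and> \<bar>Iv t\<bar> < c*(M*exp(-al*t))"
proof -
  define E where "E t = M * exp(-al*t)" for t
  define K where "K = exp(al*tau)"
  define rho where "rho = M*K"
  define Nl where "Nl = bv/mv - 2*c*rho"
  have cont: "continuous_on {-tau..} Sh" "continuous_on {-tau..} Ih"
       "continuous_on {-tau..} Sv" "continuous_on {-tau..} Iv"
    using sol unfolding dde_solution_def by blast+
  have ders: "\<And>t. t \<ge> 0 \<Longrightarrow>
        (Sh has_real_derivative
           (bh - cvh * (Iv t / (Sv t + Iv t)) * Sh t - mh * Sh t)) (at t within {0..}) \<and>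
        (Ih has_real_derivative
           (cvh * (Iv (t - tau) / (Sv (t - tau) + Iv (t - tau))) * Sh (t - tau) - mh * Ih t))
           (at t within {0..}) \<and>
        (Sv has_real_derivative (bv - chv * Ih t * Sv t - mv * Sv t)) (at t within {0..}) \<and>
        (Iv has_real_derivative (chv * Ih t * Sv t - mv * Iv t)) (at t within {0..})"
    using sol unfolding dde_solution_def by blast
  define h where "h t = max (max (\<bar>Sh t - bh/mh\<bar> - E t) (\<bar>Ih t\<bar> - E t))
                            (max (\<bar>Sv t - bv/mv\<bar> - c * E t) (\<bar>Iv t\<bar> - c * E t))" for t
  have Epos: "E t > 0" for t using M by (simp add: E_def)
  have K1: "K \<ge> 1" using al pos by (simp add: K_def)
  have Erho: "E s \<le> rho" if "s \<ge> -tau" for s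
  proof -
    have "-al * s \<le> al*tau" using mult_left_mono[of "-s" tau al] that al by simp
    then show ?thesis using M by (simp add: E_def rho_def K_def)
  qed
  have ET: "E (s - tau) = K * E s" for s
    by (simp add: E_def K_def algebra_simps flip: exp_add)
  have Nlpos: "Nl > 0" using condN by (simp add: Nl_def rho_def K_def)
  have "\<forall>t\<ge>-tau. h t < 0"
  proof (rule first_exit[of "-tau"])
    show "- tau \<le> 0" using pos by simp
    show "continuous_on {- tau..} h"
      unfolding h_def E_def using cont by (intro continuous_intros) auto
    show "\<forall>t\<in>{- tau..0}. h t < 0"
    proof
      fix t :: real assume t: "t \<in> {-tau..0}"
      have "al*t \<le> 0" using t al mult_nonneg_nonpos[of al t] by simp
      then have e1: "E t \<ge> M" using M unfolding E_def by simp
      have e2: "c * M \<le> c * E t" using e1 c by (intro mult_left_mono) auto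
      have hh: "\<bar>Sh t - bh/mh\<bar> < M" "\<bar>Ih t\<bar> < M" "\<bar>Sv t - bv/mv\<bar> < c*M" "\<bar>Iv t\<bar> < c*M"
        using hist t by blast+
      show "h t < 0" unfolding h_def max_less_iff_conj using e1 e2 hh by linarith
    qed
  next
    fix T :: real assume T: "T > 0" "h T = 0" and before: "\<forall>s\<in>{-tau..<T}. h s < 0"
    have bnd: "\<bar>Sh s - bh/mh\<bar> \<le> E s \<and> \<bar>Ih s\<bar> \<le> E s \<and> \<bar>Sv s - bv/mv\<bar> \<le> c*E s \<and> \<bar>Iv s\<bar> \<le> c * E s"
      if "s \<in> {-tau..T}" for s
    proof -
      have "h s \<le> 0"
      proof (cases "s = T")
        case True then show ?thesis using T by simp
      next
        case False
        then have "s \<in> {-tau..<T}" using that by auto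
        then show ?thesis using before by force
      qed
      then show ?thesis unfolding h_def by linarith
    qed
    have cEr: "c * E s \<le> c * rho" if "s \<in> {-tau..T}" for s
      using Erho[of s] that c by (intro mult_left_mono) auto
    have bhp: "bh/mh > 0" "bv/mv > 0" using pos by auto
    have Nb: "Sv s + Iv s \<ge> Nl" if "s \<in> {-tau..T}" for s
    proof -
      have "\<bar>Sv s - bv/mv\<bar> \<le> c * rho" "\<bar>Iv s\<bar> \<le> c * rho"
        using bnd[OF that] cEr[OF that] by linarith+
      then show ?thesis unfolding Nl_def by linarith
    qed
    have Shb: "\<bar>Sh s\<bar> \<le> bh/mh + rho" if "s \<in> {-tau..T}" for s
    proof -
      have "\<bar>Sh s - bh/mh\<bar> \<le> rho" using bnd[OF that] Erho[of s] that by auto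
      then show ?thesis using bhp by linarith
    qed
    have Svb: "\<bar>Sv s\<bar> \<le> bv/mv + c*rho" if "s \<in> {-tau..T}" for s
    proof -
      have "\<bar>Sv s - bv/mv\<bar> \<le> c * rho" using bnd[OF that] cEr[OF that] by linarith
      then show ?thesis using bhp by linarith
    qed
    have T1: "T \<in> {-tau..T}" "T - tau \<in> {-tau..T}" using T pos by auto
    have condA': "cvh * c * (bh/mh + rho) < (mh - al) * Nl"
    proof -
      have "cvh * c * (bh/mh + rho) \<le> cvh * c * K * (bh/mh + rho)"
      proof -
        have "rho > 0" using M K1 by (simp add: rho_def)
        then have "bh/mh + rho \<le> K * (bh/mh + rho)"
          using K1 pos mult_right_mono[of 1 K "bh/mh+rho"] by simp
        then show ?thesis using pos c by (simp add: mult.assoc mult_left_mono)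
      qed
      also have "\<dots> < (mh - al) * Nl" using condA by (simp add: Nl_def rho_def K_def)
      finally show ?thesis .
    qed
    have I1: "\<bar>cvh * (Iv T / (Sv T + Iv T)) * Sh T\<bar> < (mh - al) * E T"
    proof (rule prod_bound)
      show "\<bar>Iv T\<bar> \<le> c * E T" using bnd[OF T1(1)] by simp
      show "\<bar>Sh T\<bar> \<le> bh/mh + rho" using Shb[OF T1(1)] .
      show "Nl \<le> Sv T + Iv T" using Nb[OF T1(1)] .
      show "0 < Nl" by (rule Nlpos)
      show "0 \<le> cvh" using pos by simp
      have "E T * (cvh * c * (bh/mh + rho)) < E T * ((mh - al) * Nl)"
        using mult_strict_left_mono[OF condA' Epos[of T]] .
      then show "cvh * (c * E T) * (bh/mh + rho) < (mh - al) * E T * Nl" by (simp add: algebra_simps)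
    qed
    have I2: "\<bar>cvh * (Iv (T - tau) / (Sv (T - tau) + Iv (T - tau))) * Sh (T - tau)\<bar> < (mh - al) * E T"
    proof (rule prod_bound)
      show "\<bar>Iv (T - tau)\<bar> \<le> c * (K * E T)" using bnd[OF T1(2)] ET[of T] by simp
      show "\<bar>Sh (T - tau)\<bar> \<le> bh/mh + rho" using Shb[OF T1(2)] .
      show "Nl \<le> Sv (T - tau) + Iv (T - tau)" using Nb[OF T1(2)] .
      show "0 < Nl" by (rule Nlpos)
      show "0 \<le> cvh" using pos by simp
      have "E T * (cvh * c * K * (bh/mh + rho)) < E T * ((mh - al) * Nl)"
        using condA Epos[of T] by (intro mult_strict_left_mono) (auto simp: Nl_def rho_def K_def)
      then show "cvh * (c * (K * E T)) * (bh/mh + rho) < (mh - al) * E T * Nl" by (simp add: algebra_simps)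
    qed
    have I3: "\<bar>chv * Ih T * Sv T\<bar> < (mv - al) * (c * E T)"
    proof (rule prod_bound2)
      show "\<bar>Ih T\<bar> \<le> E T" using bnd[OF T1(1)] by simp
      show "\<bar>Sv T\<bar> \<le> bv/mv + c*rho" using Svb[OF T1(1)] .
      show "0 \<le> chv" using pos by simp
      have "E T * (chv * (bv/mv + c*rho)) < E T * ((mv - al) * c)"
        using condB Epos[of T] by (intro mult_strict_left_mono) (auto simp: rho_def K_def)
      then show "chv * E T * (bv/mv + c*rho) < (mv - al) * (c * E T)" by (simp add: algebra_simps)
    qed
    have dE: "(E has_real_derivative (- al * E T)) (at T within {0..})"
      unfolding E_def by (rule DERIV_E)
    have dcE: "((\<lambda>t. c * E t) has_real_derivative (c * (- al * E T))) (at T within {0..})"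
      by (intro DERIV_cmult dE)
    have dT: "T \<ge> 0" using T by simp
    have dSh: "((\<lambda>t. Sh t - bh/mh) has_real_derivative (bh - cvh * (Iv T / (Sv T + Iv T)) * Sh T - mh * Sh T) - 0) (at T within {0..})"
      using ders[OF dT] by (intro DERIV_diff DERIV_const) auto
    have dIh: "(Ih has_real_derivative (cvh * (Iv (T - tau) / (Sv (T - tau) + Iv (T - tau))) * Sh (T - tau) - mh * Ih T)) (at T within {0..})"
      using ders[OF dT] by auto
    have dSv: "((\<lambda>t. Sv t - bv/mv) has_real_derivative (bv - chv * Ih T * Sv T - mv * Sv T) - 0) (at T within {0..})"
      using ders[OF dT] by (intro DERIV_diff DERIV_const) auto
    have dIv: "(Iv has_real_derivative (chv * Ih T * Sv T - mv * Iv T)) (at T within {0..})"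
      using ders[OF dT] by auto
    have eh: "bh - mh * Sh T = - mh * (Sh T - bh/mh)" using pos by (simp add: field_simps)
    have ev: "bv - mv * Sv T = - mv * (Sv T - bv/mv)" using pos by (simp add: field_simps)
    have bef: "\<forall>s. 0 \<le> s \<and> s < T \<longrightarrow> \<bar>Sh s - bh/mh\<bar> \<le> E s \<and> \<bar>Ih s\<bar> \<le> E s \<and> \<bar>Sv s - bv/mv\<bar> \<le> c*E s \<and> \<bar>Iv s\<bar> \<le> c * E s"
      using bnd pos by auto
    have dd: "(mh - al) * E T = mh * E T - al * E T" "(mv - al) * (c * E T) = mv * (c * E T) - al * (c * E T)"
       "-al * E T = -(al*E T)" "c * (- al * E T) = - (al * (c * E T))" by (simp_all add: algebra_simps)
    from T(2) consider "\<bar>Sh T - bh/mh\<bar> = E T" | "\<bar>Ih T\<bar> = E T" | "\<bar>Sv T - bv/mv\<bar> = c * E T" | "\<bar>Iv T\<bar> = c * E T"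
      unfolding h_def by linarith
    then show False
    proof cases
      case 1
      then consider "Sh T - bh/mh = E T" | "Sh T - bh/mh = - E T" by linarith
      then show False
      proof cases
        case 1
        have e: "bh - mh * Sh T = - (mh * E T)" using eh 1 by simp
        show False
          apply (rule hit_up[OF dSh dE T(1) 1])
          using bef apply (force simp: abs_le_iff)
          using I1 e dd by arith
      next
        case 2
        have e: "bh - mh * Sh T = mh * E T" using eh 2 by simp
        show False
          apply (rule hit_low[OF dSh dE T(1) 2])
          using bef apply (force simp: abs_le_iff)
          using I1 e dd by arith
      qed
    next
      case 2
      then consider "Ih T = E T" | "Ih T = - E T" by linarith
      then show False
      proof cases
        case 1
        have e: "mh * Ih T = mh * E T" using 1 by simp
        show False
          apply (rule hit_up[OF dIh dE T(1) 1])
          using bef apply (force simp: abs_le_iff)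
          using I2 e dd by arith
      next
        case 2
        have e: "mh * Ih T = - (mh * E T)" using 2 by simp
        show False
          apply (rule hit_low[OF dIh dE T(1) 2])
          using bef apply (force simp: abs_le_iff)
          using I2 e dd by arith
      qed
    next
      case 3
      then consider "Sv T - bv/mv = c * E T" | "Sv T - bv/mv = - (c * E T)" by linarith
      then show False
      proof cases
        case 1
        have e: "bv - mv * Sv T = - (mv * (c * E T))" using ev 1 by simp
        show False
          apply (rule hit_up[OF dSv dcE T(1) 1])
          using bef apply (force simp: abs_le_iff)
          using I3 e dd by arith
      next
        case 2
        have e: "bv - mv * Sv T = mv * (c * E T)" using ev 2 by simp
        show False
          apply (rule hit_low[OF dSv dcE T(1) 2])
          using bef apply (force simp: abs_le_iff)
          using I3 e dd by arith
      qed
    next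
      case 4
      then consider "Iv T = c * E T" | "Iv T = - (c * E T)" by linarith
      then show False
      proof cases
        case 1
        have e: "mv * Iv T = mv * (c * E T)" using 1 by simp
        show False
          apply (rule hit_up[OF dIv dcE T(1) 1])
          using bef apply (force simp: abs_le_iff)
          using I3 e dd by arith
      next
        case 2
        have e: "mv * Iv T = - (mv * (c * E T))" using 2 by simp
        show False
          apply (rule hit_low[OF dIv dcE T(1) 2])
          using bef apply (force simp: abs_le_iff)
          using I3 e dd by arith
      qed
    qed
  qed
  then show ?thesis unfolding h_def E_def max_less_iff_conj by auto
qed



lemma ev_pos:
  fixes f :: "real \<Rightarrow> real"
  assumes "isCont f 0" "f 0 > 0"
  shows "eventually (\<lambda>s. f s > 0) (at_right 0)"
proof -
  have "(f \<longlongrightarrow> f 0) (at 0)" using assms(1) by (simp add: isCont_def)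
  then have "(f \<longlongrightarrow> f 0) (at_right 0)" by (rule tendsto_mono[OF at_le, rotated]) simp
  from order_tendstoD(1)[OF this assms(2)] show ?thesis .
qed

lemma mid: "(x::real) < y \<Longrightarrow> x < (x+y)/2 \<and> (x+y)/2 < y" by (auto simp: field_simps)

lemma dev_nonneg: "dev bh bv mh mv Sh Ih Sv Iv t \<ge> 0"
  by (simp add: dev_def le_max_iff_disj)

lemma part1:
  fixes bh bv mh mv cvh chv tau :: real
  assumes pos: "bh > 0" "bv > 0" "mh > 0" "mv > 0" "cvh > 0" "chv > 0" "tau \<ge> 0"
    and R: "cvh * chv * bh / (mh ^ 2 * mv) < 1"
  shows "E0_LAS bh bv mh mv cvh chv tau"
proof -
  define a where "a = cvh*bh*mv/(mh*bv)"
  define b where "b = chv*bv/mv"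
  define c where "c = (b/mv + mh/a)/2"
  have apos: "a > 0" "b > 0" using pos by (auto simp: a_def b_def)
  have ab: "a * b < mh * mv"
  proof -
    have "cvh * chv * bh < mh ^ 2 * mv" using R pos by (simp add: divide_less_eq)
    moreover have "a * b = cvh * chv * bh / mh" using pos by (simp add: a_def b_def field_simps)
    ultimately show ?thesis using pos by (simp add: divide_less_eq power2_eq_square mult_ac)
  qed
  have bm: "b/mv < mh/a" using ab apos pos by (simp add: divide_less_eq less_divide_eq mult.commute)
  have c1: "b/mv < c" "c < mh/a" using mid[OF bm] unfolding c_def by auto
  have "b/mv > 0" using apos pos by simp
  then have cpos: "c > 0" using c1 by linarith
  define f1 where "f1 s = (mh - s) * (bv/mv - 2*c*(s*exp(s*tau))) - cvh * c * exp(s*tau) * (bh/mh + s*exp(s*tau))" for s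
  define f2 where "f2 s = bv/mv - 2*c*(s*exp(s*tau))" for s
  define f3 where "f3 s = (mv - s) * c - chv * (bv/mv + c*(s*exp(s*tau)))" for s
  have f10: "f1 0 > 0"
  proof -
    have "c * a < mh" using c1 apos by (simp add: less_divide_eq)
    then have "c * (cvh*bh*mv/(mh*bv)) * (bv/mv) < mh * (bv/mv)" using pos unfolding a_def
      by (intro mult_strict_right_mono) auto
    then have "cvh * c * bh / mh < mh * bv / mv" using pos by (simp add: field_simps)
    then show ?thesis by (simp add: f1_def)
  qed
  have f20: "f2 0 > 0" using pos by (simp add: f2_def)
  have f30: "f3 0 > 0"
  proof -
    have "b < mv * c" using c1 pos by (simp add: divide_less_eq mult.commute)
    then show ?thesis by (simp add: f3_def b_def)
  qed
  have i1: "isCont f1 0" unfolding f1_def by (intro continuous_intros)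
  have i2: "isCont f2 0" unfolding f2_def by (intro continuous_intros)
  have i3: "isCont f3 0" unfolding f3_def by (intro continuous_intros)
  have "eventually (\<lambda>s. f1 s > 0 \<and> f2 s > 0 \<and> f3 s > 0) (at_right 0)"
    by (intro eventually_conj ev_pos i1 i2 i3 f10 f20 f30)
  then obtain s0 where s0: "s0 > 0" "\<forall>s>0. s < s0 \<longrightarrow> f1 s > 0 \<and> f2 s > 0 \<and> f3 s > 0"
    unfolding eventually_at_right_field by auto
  have core: "\<forall>t\<ge>0. dev bh bv mh mv Sh Ih Sv Iv t \<le> (1 + c) * (s * exp (- s * t))"
    if s: "0 < s" "s < s0" and sol: "dde_solution bh bv mh mv cvh chv tau Sh Ih Sv Iv"
      and hd: "\<forall>\<theta>\<in>{-tau..0}. dev bh bv mh mv Sh Ih Sv Iv \<theta> < s * min 1 c" for s Sh Ih Sv Iv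
  proof -
    have fs: "f1 s > 0" "f2 s > 0" "f3 s > 0" using s0 s by auto
    have "s * min 1 c \<le> s * 1" using s by (intro mult_left_mono) auto
    moreover have "s * min 1 c \<le> s * c" using s by (intro mult_left_mono) auto
    ultimately have m1: "s * min 1 c \<le> s" "s * min 1 c \<le> c * s" by (simp_all add: mult.commute)
    have hist: "\<forall>\<theta>\<in>{-tau..0}. \<bar>Sh \<theta> - bh/mh\<bar> < s \<and> \<bar>Ih \<theta>\<bar> < s \<and> \<bar>Sv \<theta> - bv/mv\<bar> < c* s \<and> \<bar>Iv \<theta>\<bar> < c* s"
    proof
      fix \<theta> assume "\<theta> \<in> {-tau..0}"
      then have "dev bh bv mh mv Sh Ih Sv Iv \<theta> < s * min 1 c" using hd by blast
      then show "\<bar>Sh \<theta> - bh/mh\<bar> < s \<and> \<bar>Ih \<theta>\<bar> < s \<and> \<bar>Sv \<theta> - bv/mv\<bar> < c* s \<and> \<bar>Iv \<theta>\<bar> < c* s"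
        using m1 unfolding dev_def max_less_iff_conj by linarith
    qed
    have st: "\<forall>t\<ge>-tau. \<bar>Sh t - bh/mh\<bar> < s*exp(-s*t) \<and> \<bar>Ih t\<bar> < s*exp(-s*t) \<and>
            \<bar>Sv t - bv/mv\<bar> < c*(s*exp(-s*t)) \<and> \<bar>Iv t\<bar> < c*(s*exp(-s*t))"
    proof (rule stab_core[OF pos s(1) _ cpos _ _ _ sol hist])
      show "0 \<le> s" using s by simp
      show "0 < bv / mv - 2 * c * (s * exp (s * tau))" using fs(2) unfolding f2_def .
      show "cvh * c * exp (s * tau) * (bh / mh + s * exp (s * tau)) < (mh - s) * (bv / mv - 2 * c * (s * exp (s * tau)))"
        using fs(1) unfolding f1_def by linarith
      show "chv * (bv / mv + c * (s * exp (s * tau))) < (mv - s) * c"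
        using fs(3) unfolding f3_def by linarith
    qed
    show ?thesis
    proof (intro allI impI)
      fix t :: real assume t: "t \<ge> 0"
      then have "t \<ge> -tau" using pos(7) by linarith
      then have "\<bar>Sh t - bh/mh\<bar> < s*exp(-s*t) \<and> \<bar>Ih t\<bar> < s*exp(-s*t) \<and>
            \<bar>Sv t - bv/mv\<bar> < c*(s*exp(-s*t)) \<and> \<bar>Iv t\<bar> < c*(s*exp(-s*t))"
        using st by blast
      then have st': "\<bar>Sh t - bh/mh\<bar> < s*exp(-s*t)" "\<bar>Ih t\<bar> < s*exp(-s*t)"
            "\<bar>Sv t - bv/mv\<bar> < c*(s*exp(-s*t))" "\<bar>Iv t\<bar> < c*(s*exp(-s*t))"
        by blast+
      have p: "0 < s*exp(-s*t)" using s by simp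
      have q1: "s*exp(-s*t) \<le> (1+c)*(s*exp(-s*t))" using p cpos by (simp add: distrib_right)
      have q2: "c*(s*exp(-s*t)) \<le> (1+c)*(s*exp(-s*t))" using p cpos by (simp add: distrib_right)
      show "dev bh bv mh mv Sh Ih Sv Iv t \<le> (1 + c) * (s * exp (- s * t))"
        unfolding dev_def using st' q1 q2 by (simp only: max.bounded_iff) linarith
    qed
  qed
  have stable: "E0_stable bh bv mh mv cvh chv tau"
    unfolding E0_stable_def
  proof (intro allI impI)
    fix e :: real assume e: "e > 0"
    define s where "s = min (s0/2) (e/(2*(1+c)))"
    have s12: "0 < s" "s < s0" using s0 e cpos by (auto simp: s_def)
    have "s \<le> e/(2*(1+c))" by (simp add: s_def)
    then have "(1+c) * s \<le> (1+c) * (e/(2*(1+c)))" using cpos by (intro mult_left_mono) auto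
    also have "\<dots> = e/2" using cpos by (simp add: field_simps)
    finally have "(1+c) * s < e" using e by linarith
    note s = s12 this
    show "\<exists>\<delta>>0. \<forall>Sh Ih Sv Iv.
            dde_solution bh bv mh mv cvh chv tau Sh Ih Sv Iv \<and> history_in_Cplus tau Sh Ih Sv Iv \<and>
            (\<forall>\<theta>\<in>{- tau..0}. dev bh bv mh mv Sh Ih Sv Iv \<theta> < \<delta>) \<longrightarrow>
            (\<forall>t\<ge>0. dev bh bv mh mv Sh Ih Sv Iv t < e)"
    proof (intro exI[of _ "s * min 1 c"] conjI allI impI)
      show "0 < s * min 1 c" using s cpos by simp
      fix Sh Ih Sv Iv and t :: real
      assume H: "dde_solution bh bv mh mv cvh chv tau Sh Ih Sv Iv \<and> history_in_Cplus tau Sh Ih Sv Iv \<and>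
            (\<forall>\<theta>\<in>{- tau..0}. dev bh bv mh mv Sh Ih Sv Iv \<theta> < s * min 1 c)" and t: "0 \<le> t"
      have H1: "dde_solution bh bv mh mv cvh chv tau Sh Ih Sv Iv"
        "\<forall>\<theta>\<in>{- tau..0}. dev bh bv mh mv Sh Ih Sv Iv \<theta> < s * min 1 c" using H by simp_all
      have "dev bh bv mh mv Sh Ih Sv Iv t \<le> (1 + c) * (s * exp (- s * t))"
        using core[OF s(1,2) H1] t by simp
      also have "\<dots> \<le> (1 + c) * s"
      proof -
        have "exp (- s * t) \<le> 1" using s t by (simp add: mult_nonneg_nonneg)
        then show ?thesis using s cpos by (simp add: mult_left_le)
      qed
      also have "\<dots> < e" by (rule s(3))
      finally show "dev bh bv mh mv Sh Ih Sv Iv t < e" .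
    qed
  qed
  have attr: "E0_attractive bh bv mh mv cvh chv tau"
    unfolding E0_attractive_def
  proof (intro exI[of _ "s0/2 * min 1 c"] conjI allI impI)
    show "0 < s0/2 * min 1 c" using s0 cpos by simp
    fix Sh Ih Sv Iv
    assume H: "dde_solution bh bv mh mv cvh chv tau Sh Ih Sv Iv \<and> history_in_Cplus tau Sh Ih Sv Iv \<and>
            (\<forall>\<theta>\<in>{- tau..0}. dev bh bv mh mv Sh Ih Sv Iv \<theta> < s0/2 * min 1 c)"
    have b: "\<forall>t\<ge>0. dev bh bv mh mv Sh Ih Sv Iv t \<le> (1 + c) * (s0/2 * exp (- (s0/2) * t))"
    proof -
      have H1: "dde_solution bh bv mh mv cvh chv tau Sh Ih Sv Iv"
        "\<forall>\<theta>\<in>{- tau..0}. dev bh bv mh mv Sh Ih Sv Iv \<theta> < s0/2 * min 1 c" using H by simp_all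
      have "0 < s0/2" "s0/2 < s0" using s0 by simp_all
      from core[OF this H1] show ?thesis .
    qed
    have lim: "((\<lambda>t. ((1 + c) * (s0/2)) * exp (- (s0/2) * t)) \<longlongrightarrow> 0) at_top"
      using s0 by (intro tendsto_mult_right_zero filterlim_compose[OF exp_at_bot]
          filterlim_tendsto_neg_mult_at_bot[OF tendsto_const] filterlim_ident) auto
    show "((\<lambda>t. dev bh bv mh mv Sh Ih Sv Iv t) \<longlongrightarrow> 0) at_top"
    proof (rule tendsto_sandwich[OF _ _ tendsto_const lim])
      show "\<forall>\<^sub>F n in at_top. 0 \<le> dev bh bv mh mv Sh Ih Sv Iv n" by (simp add: dev_nonneg)
      show "\<forall>\<^sub>F n in at_top. dev bh bv mh mv Sh Ih Sv Iv n \<le> (1 + c) * (s0 / 2) * exp (- (s0 / 2) * n)"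
        using eventually_ge_at_top[of "0::real"]
      proof eventually_elim
        case (elim n)
        then show ?case using b by (simp add: mult.assoc)
      qed
    qed
  qed
  show ?thesis using stable attr by (simp add: E0_LAS_def)
qed



lemma low_prod:
  fixes Lx x Ly y n Hn :: real
  assumes "0 < Lx" "Lx \<le> x" "0 < Ly" "Ly \<le> y" "0 < n" "n \<le> Hn"
  shows "Lx * Ly / Hn \<le> x / n * y"
proof -
  have "Lx * Ly / Hn \<le> x * y / Hn" using assms by (intro divide_right_mono mult_mono) auto
  also have "\<dots> \<le> x * y / n" using assms by (intro divide_left_mono) auto
  finally show ?thesis by simp
qed

lemma DERIV_G:
  fixes z lam :: real
  shows "((\<lambda>t. z * exp (lam * t)) has_real_derivative (lam * (z * exp (lam * T)))) (at T within S)"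
  by (auto intro!: derivative_eq_intros simp: algebra_simps)

lemma inst_core:
  fixes bh bv mh mv cvh chv tau eps lam zeta c2 :: real
  assumes pos: "bh > 0" "bv > 0" "mh > 0" "mv > 0" "cvh > 0" "chv > 0" "tau \<ge> 0"
    and eps: "eps > 0" "eps < bh/mh" "eps < bv/mv" and lam: "lam \<ge> 0" and zeta: "zeta > 0" and c2: "c2 > 0"
    and D1: "cvh * c2 * exp(-lam*tau) * (bh/mh - eps) > (mh + lam) * (bv/mv + 2*eps)"
    and D2: "chv * (bv/mv - eps) > (mv + lam) * c2"
    and sol: "dde_solution bh bv mh mv cvh chv tau Sh Ih Sv Iv"
    and hist: "\<forall>\<theta>\<in>{-tau..0}. Ih \<theta> > zeta*exp(lam*\<theta>) \<and> Iv \<theta> > c2*(zeta*exp(lam*\<theta>)) \<and>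
                  Sh \<theta> \<ge> bh/mh - eps \<and> Sv \<theta> + Iv \<theta> \<le> bv/mv + 2*eps"
    and bound: "\<forall>t\<ge>0. dev bh bv mh mv Sh Ih Sv Iv t < eps"
  shows "\<forall>t\<ge>-tau. Ih t > zeta*exp(lam*t) \<and> Iv t > c2*(zeta*exp(lam*t))"
proof -
  define Z where "Z t = zeta * exp(lam*t)" for t
  have cont: "continuous_on {-tau..} Sh" "continuous_on {-tau..} Ih"
       "continuous_on {-tau..} Sv" "continuous_on {-tau..} Iv"
    using sol unfolding dde_solution_def by blast+
  have Npos: "\<forall>t\<ge>-tau. Sv t + Iv t > 0" using sol unfolding dde_solution_def by blast
  have ders: "\<And>t. t \<ge> 0 \<Longrightarrow>
        (Sh has_real_derivative
           (bh - cvh * (Iv t / (Sv t + Iv t)) * Sh t - mh * Sh t)) (at t within {0..}) \<and>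
        (Ih has_real_derivative
           (cvh * (Iv (t - tau) / (Sv (t - tau) + Iv (t - tau))) * Sh (t - tau) - mh * Ih t))
           (at t within {0..}) \<and>
        (Sv has_real_derivative (bv - chv * Ih t * Sv t - mv * Sv t)) (at t within {0..}) \<and>
        (Iv has_real_derivative (chv * Ih t * Sv t - mv * Iv t)) (at t within {0..})"
    using sol unfolding dde_solution_def by blast
  have Zpos: "Z t > 0" for t using zeta by (simp add: Z_def)
  have ZT: "Z (t - tau) = exp(-lam*tau) * Z t" for t
    by (simp add: Z_def algebra_simps flip: exp_add)
  have devb: "\<bar>Sh t - bh/mh\<bar> < eps" "\<bar>Sv t - bv/mv\<bar> < eps" "\<bar>Iv t\<bar> < eps" if "t \<ge> 0" for t
    using bound that unfolding dev_def max_less_iff_conj by auto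
  have Shl: "Sh t \<ge> bh/mh - eps" if "t \<ge> -tau" for t
  proof (cases "t \<ge> 0")
    case True then show ?thesis using devb(1)[OF True] by linarith
  next
    case False then show ?thesis using hist that by auto
  qed
  have Nh: "Sv t + Iv t \<le> bv/mv + 2*eps" if "t \<ge> -tau" for t
  proof (cases "t \<ge> 0")
    case True then show ?thesis using devb(2,3)[OF True] by linarith
  next
    case False then show ?thesis using hist that by auto
  qed
  have Svl: "Sv t \<ge> bv/mv - eps" if "t \<ge> 0" for t using devb(2)[OF that] by linarith
  define h where "h t = max (Z t - Ih t) (c2 * Z t - Iv t)" for t
  have "\<forall>t\<ge>-tau. h t < 0"
  proof (rule first_exit[of "-tau"])
    show "- tau \<le> 0" using pos by simp
    show "continuous_on {- tau..} h"
      unfolding h_def Z_def using cont by (intro continuous_intros) auto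
    show "\<forall>t\<in>{- tau..0}. h t < 0"
    proof
      fix t assume t: "t \<in> {-tau..0}"
      have "Ih t > Z t" "Iv t > c2 * Z t" using hist t unfolding Z_def by blast+
      then show "h t < 0" unfolding h_def by simp
    qed
  next
    fix T :: real assume T: "T > 0" "h T = 0" and before: "\<forall>s\<in>{-tau..<T}. h s < 0"
    have bnd: "Ih s \<ge> Z s \<and> Iv s \<ge> c2 * Z s" if "s \<in> {-tau..T}" for s
    proof -
      have "h s \<le> 0"
      proof (cases "s = T")
        case True then show ?thesis using T by simp
      next
        case False
        then have "s \<in> {-tau..<T}" using that by auto
        then show ?thesis using before by force
      qed
      then show ?thesis unfolding h_def by simp
    qed
    have T1: "T \<in> {-tau..T}" "T - tau \<in> {-tau..T}" using T pos by auto
    have dT: "T \<ge> 0" using T by simp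
    have dIh: "(Ih has_real_derivative (cvh * (Iv (T - tau) / (Sv (T - tau) + Iv (T - tau))) * Sh (T - tau) - mh * Ih T)) (at T within {0..})"
      using ders[OF dT] by blast
    have dIv: "(Iv has_real_derivative (chv * Ih T * Sv T - mv * Iv T)) (at T within {0..})"
      using ders[OF dT] by blast
    have dZ: "(Z has_real_derivative (lam * Z T)) (at T within {0..})"
      unfolding Z_def by (rule DERIV_G)
    have dcZ: "((\<lambda>t. c2 * Z t) has_real_derivative (c2 * (lam * Z T))) (at T within {0..})"
      by (intro DERIV_cmult dZ)
    have bef: "\<forall>s. 0 \<le> s \<and> s < T \<longrightarrow> Z s \<le> Ih s \<and> c2 * Z s \<le> Iv s"
      using bnd pos by auto
    from T(2) consider "Ih T = Z T" | "Iv T = c2 * Z T" unfolding h_def by linarith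
    then show False
    proof cases
      case 1
      have lo: "c2 * (exp(-lam*tau) * Z T) * (bh/mh - eps) / (bv/mv + 2*eps)
              \<le> Iv (T - tau) / (Sv (T - tau) + Iv (T - tau)) * Sh (T - tau)"
      proof (rule low_prod)
        show "0 < c2 * (exp(-lam*tau) * Z T)" using c2 Zpos[of T] by simp
        show "c2 * (exp(-lam*tau) * Z T) \<le> Iv (T - tau)" using bnd[OF T1(2)] ZT[of T] by simp
        show "0 < bh/mh - eps" using eps by simp
        show "bh/mh - eps \<le> Sh (T - tau)" using Shl T1(2) by simp
        show "0 < Sv (T - tau) + Iv (T - tau)" using Npos T1(2) by simp
        show "Sv (T - tau) + Iv (T - tau) \<le> bv/mv + 2*eps" using Nh T1(2) by simp
      qed
      have Hp: "bv/mv + 2*eps > 0" using eps pos by (simp add: add_pos_pos)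
      have "(mh + lam) * Z T < cvh * (c2 * (exp(-lam*tau) * Z T) * (bh/mh - eps) / (bv/mv + 2*eps))"
      proof -
        have "(mh + lam) * (bv/mv + 2*eps) * Z T < cvh * c2 * exp(-lam*tau) * (bh/mh - eps) * Z T"
          using D1 Zpos[of T] by (intro mult_strict_right_mono) auto
        then have "(mh + lam) * Z T * (bv/mv + 2*eps) < cvh * (c2 * (exp(-lam*tau) * Z T) * (bh/mh - eps))"
          by (simp only: mult_ac)
        then show ?thesis using Hp by (simp add: less_divide_eq)
      qed
      also have "\<dots> \<le> cvh * (Iv (T - tau) / (Sv (T - tau) + Iv (T - tau)) * Sh (T - tau))"
        using lo pos by (intro mult_left_mono) auto
      finally have key: "(mh + lam) * Z T < cvh * (Iv (T - tau) / (Sv (T - tau) + Iv (T - tau))) * Sh (T - tau)"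
        by (simp add: mult.assoc)
      show False
        apply (rule hit_up[OF dZ dIh T(1) 1[symmetric]])
        using bef apply blast
        using key 1 by (simp add: algebra_simps)
    next
      case 2
      have "Z T * (bv/mv - eps) \<le> Ih T * Sv T"
        using bnd[OF T1(1)] Svl[OF dT] Zpos[of T] eps by (intro mult_mono) auto
      then have "chv * (Z T * (bv/mv - eps)) \<le> chv * (Ih T * Sv T)" using pos by (intro mult_left_mono) auto
      moreover have "(mv + lam) * c2 * Z T < chv * (bv/mv - eps) * Z T"
        using D2 Zpos[of T] by (intro mult_strict_right_mono) auto
      ultimately have key: "(mv + lam) * (c2 * Z T) < chv * Ih T * Sv T" by (simp add: algebra_simps)
      show False
        apply (rule hit_up[OF dcZ dIv T(1) 2[symmetric]])
        using bef apply blast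
        using key 2 by (simp add: algebra_simps)
    qed
  qed
  then show ?thesis unfolding h_def Z_def max_less_iff_conj by auto
qed



lemma nfst: "norm (fst (v :: 'a::real_normed_vector \<times> 'b::real_normed_vector)) \<le> norm v"
proof -
  have "norm (fst v) = sqrt ((norm (fst v))\<^sup>2)" by simp
  also have "\<dots> \<le> sqrt ((norm (fst v))\<^sup>2 + (norm (snd v))\<^sup>2)" by (intro real_sqrt_le_mono) simp
  also have "\<dots> = norm v" by (simp add: norm_prod_def)
  finally show ?thesis .
qed

lemma nsnd: "norm (snd (v :: 'a::real_normed_vector \<times> 'b::real_normed_vector)) \<le> norm v"
proof -
  have "norm (snd v) = sqrt ((norm (snd v))\<^sup>2)" by simp
  also have "\<dots> \<le> sqrt ((norm (fst v))\<^sup>2 + (norm (snd v))\<^sup>2)" by (intro real_sqrt_le_mono) simp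
  also have "\<dots> = norm v" by (simp add: norm_prod_def)
  finally show ?thesis .
qed

lemma comp_bounds:
  fixes v :: "real \<times> real \<times> real"
  shows "\<bar>fst v\<bar> \<le> norm v" "\<bar>fst (snd v)\<bar> \<le> norm v" "\<bar>snd (snd v)\<bar> \<le> norm v"
  using nfst[of v] nsnd[of v] nfst[of "snd v"] nsnd[of "snd v"] by auto

lemma norm3: "norm ((a, b, c) :: real \<times> real \<times> real) \<le> \<bar>a\<bar> + \<bar>b\<bar> + \<bar>c\<bar>"
  using norm_Pair_le[of a "(b, c)"] norm_Pair_le[of b c] by simp

definition clamp :: "real \<Rightarrow> real \<Rightarrow> real \<Rightarrow> real" where
  "clamp lo hi x = max lo (min hi x)"

lemma clamp_range: "lo \<le> hi \<Longrightarrow> lo \<le> clamp lo hi x \<and> clamp lo hi x \<le> hi"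
  by (auto simp: clamp_def)

lemma clamp_id: "lo \<le> x \<Longrightarrow> x \<le> hi \<Longrightarrow> clamp lo hi x = x"
  by (auto simp: clamp_def)

lemma clamp_lip: "lo \<le> hi \<Longrightarrow> \<bar>clamp lo hi x - clamp lo hi y\<bar> \<le> \<bar>x - y\<bar>"
  by (auto simp: clamp_def)

lemma clamp_cont [continuous_intros]:
  "continuous_on S f \<Longrightarrow> continuous_on S (\<lambda>x. clamp lo hi (f x))"
  unfolding clamp_def by (intro continuous_intros)

lemma prod_lip:
  fixes a a' b b' A B :: real
  assumes "0 \<le> a" "a \<le> A" "0 \<le> a'" "a' \<le> A" "0 \<le> b" "b \<le> B" "0 \<le> b'" "b' \<le> B"
  shows "\<bar>a * b - a' * b'\<bar> \<le> A * \<bar>b - b'\<bar> + B * \<bar>a - a'\<bar>"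
proof -
  have "a * b - a' * b' = a * (b - b') + b' * (a - a')" by (simp add: algebra_simps)
  then have "\<bar>a * b - a' * b'\<bar> \<le> \<bar>a\<bar> * \<bar>b - b'\<bar> + \<bar>b'\<bar> * \<bar>a - a'\<bar>"
    by (simp add: abs_mult[symmetric] abs_triangle_ineq)
  also have "\<dots> \<le> A * \<bar>b - b'\<bar> + B * \<bar>a - a'\<bar>"
    using assms by (intro add_mono mult_right_mono) auto
  finally show ?thesis .
qed

lemma lipA:
  fixes k m n b A B A' B' x x' :: real
  assumes "k \<ge> 0" "m \<ge> 0" "n > 0"
  shows "\<bar>(b - k*(A/n)*B - m*x) - (b - k*(A'/n)*B' - m*x')\<bar> \<le> (k/n)*\<bar>A*B - A'*B'\<bar> + m*\<bar>x - x'\<bar>"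
proof -
  have "(b - k*(A/n)*B - m*x) - (b - k*(A'/n)*B' - m*x') = (k/n)*(A'*B' - A*B) + m*(x' - x)"
    by (simp add: algebra_simps)
  then have "\<bar>(b - k*(A/n)*B - m*x) - (b - k*(A'/n)*B' - m*x')\<bar> = \<bar>(k/n)*(A'*B' - A*B) + m*(x' - x)\<bar>"
    by simp
  also have "\<dots> \<le> \<bar>(k/n)*(A'*B' - A*B)\<bar> + \<bar>m*(x' - x)\<bar>" by (rule abs_triangle_ineq)
  also have "\<dots> = (k/n)*\<bar>A*B - A'*B'\<bar> + m*\<bar>x - x'\<bar>" using assms by (simp add: abs_mult abs_minus_commute)
  finally show ?thesis .
qed

lemma lipB:
  fixes k m n A B A' B' x x' :: real
  assumes "k \<ge> 0" "m \<ge> 0" "n > 0"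
  shows "\<bar>(k*(A/n)*B - m*x) - (k*(A'/n)*B' - m*x')\<bar> \<le> (k/n)*\<bar>A*B - A'*B'\<bar> + m*\<bar>x - x'\<bar>"
proof -
  have "(k*(A/n)*B - m*x) - (k*(A'/n)*B' - m*x') = (k/n)*(A*B - A'*B') + m*(x' - x)"
    by (simp add: algebra_simps)
  then have "\<bar>(k*(A/n)*B - m*x) - (k*(A'/n)*B' - m*x')\<bar> = \<bar>(k/n)*(A*B - A'*B') + m*(x' - x)\<bar>"
    by simp
  also have "\<dots> \<le> \<bar>(k/n)*(A*B - A'*B')\<bar> + \<bar>m*(x' - x)\<bar>" by (rule abs_triangle_ineq)
  also have "\<dots> = (k/n)*\<bar>A*B - A'*B'\<bar> + m*\<bar>x - x'\<bar>" using assms by (simp add: abs_mult abs_minus_commute)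
  finally show ?thesis .
qed

lemma lipC:
  fixes k m C D C' D' z z' :: real
  assumes "k \<ge> 0" "m \<ge> 0"
  shows "\<bar>(k*C*D - m*z) - (k*C'*D' - m*z')\<bar> \<le> k*\<bar>C*D - C'*D'\<bar> + m*\<bar>z - z'\<bar>"
proof -
  have "(k*C*D - m*z) - (k*C'*D' - m*z') = k*(C*D - C'*D') + m*(z' - z)"
    by (simp add: algebra_simps)
  then have "\<bar>(k*C*D - m*z) - (k*C'*D' - m*z')\<bar> = \<bar>k*(C*D - C'*D') + m*(z' - z)\<bar>"
    by simp
  also have "\<dots> \<le> \<bar>k*(C*D - C'*D')\<bar> + \<bar>m*(z' - z)\<bar>" by (rule abs_triangle_ineq)
  also have "\<dots> = k*\<bar>C*D - C'*D'\<bar> + m*\<bar>z - z'\<bar>" using assms by (simp add: abs_mult abs_minus_commute)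
  finally show ?thesis .
qed

lemma vd_fst: "(x has_vector_derivative v) F \<Longrightarrow> ((\<lambda>t. fst (x t)) has_real_derivative fst v) F"
  unfolding has_real_derivative_iff_has_vector_derivative has_vector_derivative_def
  by (drule has_derivative_fst) simp

lemma vd_snd: "(x has_vector_derivative v) F \<Longrightarrow> ((\<lambda>t. snd (x t)) has_vector_derivative snd v) F"
  unfolding has_vector_derivative_def
  by (drule has_derivative_snd) simp

lemma vd_snd_real: "(x has_vector_derivative v) F \<Longrightarrow> ((\<lambda>t. snd (x t)) has_real_derivative snd v) F"
  unfolding has_real_derivative_iff_has_vector_derivative by (rule vd_snd)



lemma sys_exists:
  fixes bh bv mh mv cvh chv tau eta :: real
  assumes pos: "bh > 0" "bv > 0" "mh > 0" "mv > 0" "cvh > 0" "chv > 0" "tau \<ge> 0"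
    and eta: "0 < eta" "eta < bv/mv"
  shows "\<exists>Sh Ih Sv Iv. dde_solution bh bv mh mv cvh chv tau Sh Ih Sv Iv \<and>
           (\<forall>\<theta>\<in>{-tau..0}. Sh \<theta> = bh/mh \<and> Ih \<theta> = eta \<and> Sv \<theta> = bv/mv - eta \<and> Iv \<theta> = eta)"
proof -
  define n0 where "n0 = bv/mv"
  define X1 where "X1 = 2*bh/mh"
  define X2 where "X2 = cvh*X1/mh + n0"
  have n0: "n0 > 0" using pos by (simp add: n0_def)
  have X1: "X1 > 0" using pos by (simp add: X1_def)
  have "cvh*X1/mh > 0" using pos X1 by simp
  then have X2: "X2 > 0" using n0 unfolding X2_def by linarith
  define c1 where "c1 = clamp 0 X1"
  define c2 where "c2 = clamp 0 X2"
  define c3 where "c3 = clamp 0 n0"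
  have r1: "0 \<le> c1 x \<and> c1 x \<le> X1" for x unfolding c1_def using clamp_range X1 by simp
  have r2: "0 \<le> c2 x \<and> c2 x \<le> X2" for x unfolding c2_def using clamp_range X2 by simp
  have r3: "0 \<le> c3 x \<and> c3 x \<le> n0" for x unfolding c3_def using clamp_range n0 by simp
  have l1: "\<bar>c1 x - c1 y\<bar> \<le> \<bar>x - y\<bar>" for x y unfolding c1_def using clamp_lip X1 by simp
  have l2: "\<bar>c2 x - c2 y\<bar> \<le> \<bar>x - y\<bar>" for x y unfolding c2_def using clamp_lip X2 by simp
  have l3: "\<bar>c3 x - c3 y\<bar> \<le> \<bar>x - y\<bar>" for x y unfolding c3_def using clamp_lip n0 by simp
  define F where "F p q = (bh - cvh * (c3 (snd (snd p)) / n0) * c1 (fst p) - mh * fst p,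
         cvh * (c3 (snd (snd q)) / n0) * c1 (fst q) - mh * fst (snd p),
         chv * c2 (fst (snd p)) * (n0 - c3 (snd (snd p))) - mv * snd (snd p))"
    for p q :: "real \<times> real \<times> real"
  define L where "L = 2 * ((cvh/n0)*(n0 + X1) + mh) + chv*(X2 + n0) + mv"
  have Lpos: "L > 0" using pos n0 X1 X2 by (simp add: L_def add_pos_pos)
  have FL: "norm (F p q - F p' q') \<le> L * (norm (p - p') + norm (q - q'))" for p q p' q'
  proof -
    define d where "d = norm (p - p') + norm (q - q')"
    have dp: "\<bar>fst p - fst p'\<bar> \<le> d" "\<bar>fst (snd p) - fst (snd p')\<bar> \<le> d" "\<bar>snd (snd p) - snd (snd p')\<bar> \<le> d"
             "\<bar>fst q - fst q'\<bar> \<le> d" "\<bar>snd (snd q) - snd (snd q')\<bar> \<le> d"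
      using comp_bounds[of "p - p'"] comp_bounds[of "q - q'"] norm_ge_zero[of "p - p'"] norm_ge_zero[of "q - q'"]
      unfolding d_def by auto
    have P1: "\<bar>c3 z * c1 x - c3 z' * c1 x'\<bar> \<le> (n0 + X1) * d"
      if "\<bar>x - x'\<bar> \<le> d" "\<bar>z - z'\<bar> \<le> d" for x x' z z'
    proof -
      have "\<bar>c3 z * c1 x - c3 z' * c1 x'\<bar> \<le> n0 * \<bar>c1 x - c1 x'\<bar> + X1 * \<bar>c3 z - c3 z'\<bar>"
        using r1 r3 by (intro prod_lip) auto
      also have "\<dots> \<le> n0 * d + X1 * d"
        using l1[of x x'] l3[of z z'] that n0 X1 by (intro add_mono mult_left_mono) auto
      finally show ?thesis by (simp add: algebra_simps)
    qed
    have P2: "\<bar>c2 y * (n0 - c3 z) - c2 y' * (n0 - c3 z')\<bar> \<le> (X2 + n0) * d"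
      if "\<bar>y - y'\<bar> \<le> d" "\<bar>z - z'\<bar> \<le> d" for y y' z z'
    proof -
      have "\<bar>c2 y * (n0 - c3 z) - c2 y' * (n0 - c3 z')\<bar> \<le> X2 * \<bar>(n0 - c3 z) - (n0 - c3 z')\<bar> + n0 * \<bar>c2 y - c2 y'\<bar>"
        using r2 r3 by (intro prod_lip) auto
      also have "\<dots> \<le> X2 * d + n0 * d"
        using l2[of y y'] l3[of z' z] that n0 X2 by (intro add_mono mult_left_mono) (auto simp: abs_minus_commute)
      finally show ?thesis by (simp add: algebra_simps)
    qed
    have D1: "\<bar>fst (F p q) - fst (F p' q')\<bar> \<le> (cvh/n0)*((n0 + X1) * d) + mh * d"
    proof -
      have "\<bar>fst (F p q) - fst (F p' q')\<bar> \<le> (cvh/n0) * \<bar>c3 (snd (snd p)) * c1 (fst p) - c3 (snd (snd p')) * c1 (fst p')\<bar> + mh * \<bar>fst p - fst p'\<bar>"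
        unfolding F_def using pos n0 by (simp only: fst_conv) (rule lipA; simp)
      also have "\<dots> \<le> (cvh/n0)*((n0 + X1) * d) + mh * d"
        using P1[OF dp(1) dp(3)] dp(1) pos n0 by (intro add_mono mult_left_mono) auto
      finally show ?thesis .
    qed
    have D2: "\<bar>fst (snd (F p q)) - fst (snd (F p' q'))\<bar> \<le> (cvh/n0)*((n0 + X1) * d) + mh * d"
    proof -
      have "\<bar>fst (snd (F p q)) - fst (snd (F p' q'))\<bar> \<le> (cvh/n0) * \<bar>c3 (snd (snd q)) * c1 (fst q) - c3 (snd (snd q')) * c1 (fst q')\<bar> + mh * \<bar>fst (snd p) - fst (snd p')\<bar>"
        unfolding F_def using pos n0 by (simp only: fst_conv snd_conv) (rule lipB; simp)
      also have "\<dots> \<le> (cvh/n0)*((n0 + X1) * d) + mh * d"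
        using P1[OF dp(4) dp(5)] dp(2) pos n0 by (intro add_mono mult_left_mono) auto
      finally show ?thesis .
    qed
    have D3: "\<bar>snd (snd (F p q)) - snd (snd (F p' q'))\<bar> \<le> chv*((X2 + n0) * d) + mv * d"
    proof -
      have "\<bar>snd (snd (F p q)) - snd (snd (F p' q'))\<bar> \<le> chv * \<bar>c2 (fst (snd p)) * (n0 - c3 (snd (snd p))) - c2 (fst (snd p')) * (n0 - c3 (snd (snd p')))\<bar> + mv * \<bar>snd (snd p) - snd (snd p')\<bar>"
        unfolding F_def using pos by (simp only: snd_conv) (rule lipC; simp)
      also have "\<dots> \<le> chv*((X2 + n0) * d) + mv * d"
        using P2[OF dp(2) dp(3)] dp(3) pos by (intro add_mono mult_left_mono) auto
      finally show ?thesis .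
    qed
    have "F p q - F p' q' = (fst (F p q) - fst (F p' q'), fst (snd (F p q)) - fst (snd (F p' q')),
                            snd (snd (F p q)) - snd (snd (F p' q')))"
      by (simp add: prod_eq_iff)
    then have "norm (F p q - F p' q') \<le> \<bar>fst (F p q) - fst (F p' q')\<bar> + \<bar>fst (snd (F p q)) - fst (snd (F p' q'))\<bar> +
                  \<bar>snd (snd (F p q)) - snd (snd (F p' q'))\<bar>"
      using norm3 by metis
    also have "\<dots> \<le> ((cvh/n0)*((n0 + X1) * d) + mh * d) + ((cvh/n0)*((n0 + X1) * d) + mh * d) + (chv*((X2 + n0) * d) + mv * d)"
      by (intro add_mono D1 D2 D3)
    also have "\<dots> = L * d"
      unfolding L_def by (simp add: distrib_left distrib_right mult.assoc)
    finally show ?thesis unfolding d_def .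
  qed
  have Fc: "continuous_on UNIV (\<lambda>p. F (fst p) (snd p))"
    unfolding F_def c1_def c2_def c3_def using n0 by (intro continuous_intros) auto
  define phi where "phi t = (bh/mh, eta, eta)" for t :: real
  have phic: "continuous_on {-tau..0} phi" unfolding phi_def by simp
  obtain x where xc: "continuous_on {-tau..} x" and xphi: "\<forall>t\<in>{-tau..0}. x t = phi t"
    and xd: "\<forall>t\<ge>0. (x has_vector_derivative F (x t) (x (t - tau))) (at t within {0..})"
    using dde_exist[OF pos(7) Lpos Fc FL phic] by blast
  define x1 where "x1 t = fst (x t)" for t
  define x2 where "x2 t = fst (snd (x t))" for t
  define x3 where "x3 t = snd (snd (x t))" for t
  have xc': "continuous_on {-tau..} x1" "continuous_on {-tau..} x2" "continuous_on {-tau..} x3"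
    unfolding x1_def x2_def x3_def using xc by (intro continuous_intros; simp)+
  have d1: "(x1 has_real_derivative (bh - cvh * (c3 (x3 t) / n0) * c1 (x1 t) - mh * x1 t)) (at t within {0..})"
    if "t \<ge> 0" for t
    using vd_fst[OF xd[rule_format, OF that]] unfolding x1_def x2_def x3_def F_def by simp
  have d2: "(x2 has_real_derivative (cvh * (c3 (x3 (t - tau)) / n0) * c1 (x1 (t - tau)) - mh * x2 t)) (at t within {0..})"
    if "t \<ge> 0" for t
    using vd_fst[OF vd_snd[OF xd[rule_format, OF that]]] unfolding x1_def x2_def x3_def F_def by simp
  have d3: "(x3 has_real_derivative (chv * c2 (x2 t) * (n0 - c3 (x3 t)) - mv * x3 t)) (at t within {0..})"
    if "t \<ge> 0" for t
    using vd_snd_real[OF vd_snd[OF xd[rule_format, OF that]]] unfolding x1_def x2_def x3_def F_def by simp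
  have hist: "x1 t = bh/mh" "x2 t = eta" "x3 t = eta" if "t \<in> {-tau..0}" for t
    using xphi that unfolding x1_def x2_def x3_def phi_def by auto
  define kap where "kap = mh + mv + 1"
  define beta where "beta = eta * exp (- kap * tau) / 2"
  define B where "B t = beta * exp (- kap * t)" for t
  have Bpos: "B t > 0" for t using eta by (simp add: B_def beta_def)
  have dB: "(B has_real_derivative (- kap * B T)) (at T within {0..})" for T
    unfolding B_def by (rule DERIV_E)
  have X2eta: "eta < X2" using eta \<open>cvh*X1/mh > 0\<close> unfolding X2_def n0_def by linarith
  have X1b: "bh/mh < X1"
  proof -
    have "X1 = 2*(bh/mh)" by (simp add: X1_def)
    moreover have "bh/mh > 0" using pos by simp
    ultimately show ?thesis by linarith
  qed
  define h where "h t = max (max (- x1 t) (x1 t - X1)) (max (max (B t - x2 t) (x2 t - X2)) (max (B t - x3 t) (x3 t - n0)))" for t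
  have box: "\<forall>t\<ge>-tau. h t < 0"
  proof (rule first_exit[of "-tau"])
    show "- tau \<le> 0" using pos by simp
    show "continuous_on {- tau..} h"
      unfolding h_def B_def using xc' by (intro continuous_intros) auto
    show "\<forall>t\<in>{- tau..0}. h t < 0"
    proof
      fix t assume t: "t \<in> {-tau..0}"
      have "kap > 0" using pos by (simp add: kap_def add_pos_pos)
      then have "0 \<le> kap * (tau + t)" using t by (intro mult_nonneg_nonneg) auto
      then have "- kap * tau - kap * t \<le> 0" by (simp add: algebra_simps)
      then have "exp (- kap * tau - kap * t) \<le> 1" by simp
      then have "B t \<le> eta / 2" using eta
        by (simp add: B_def beta_def mult.assoc flip: exp_add)
      then show "h t < 0" unfolding h_def using hist[OF t] pos eta X1b X2eta n0 unfolding n0_def by auto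
    qed
  next
    fix T :: real assume T: "T > 0" "h T = 0" and before: "\<forall>s\<in>{-tau..<T}. h s < 0"
    have bef: "\<forall>s. 0 \<le> s \<and> s < T \<longrightarrow> 0 \<le> x1 s \<and> x1 s \<le> X1 \<and> B s \<le> x2 s \<and> x2 s \<le> X2 \<and> B s \<le> x3 s \<and> x3 s \<le> n0"
    proof (intro allI impI)
      fix s assume "0 \<le> s \<and> s < T"
      then have "s \<in> {-tau..<T}" using pos by auto
      then have "h s < 0" using before by blast
      then show "0 \<le> x1 s \<and> x1 s \<le> X1 \<and> B s \<le> x2 s \<and> x2 s \<le> X2 \<and> B s \<le> x3 s \<and> x3 s \<le> n0"
        unfolding h_def by simp
    qed
    have dT: "T \<ge> 0" using T by simp
    have kap: "kap > mh" "kap > mv" using pos by (auto simp: kap_def)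
    have cz: "c1 0 = 0" unfolding c1_def clamp_def using X1 by simp
    have cn: "c3 n0 = n0" unfolding c3_def clamp_def using n0 by simp
    have nn1: "cvh * (c3 z / n0) * c1 y \<ge> 0" for z y using r1 r3 pos n0 by simp
    have nn2: "cvh * (c3 z / n0) * c1 y \<le> cvh * X1" for z y
    proof -
      have "c3 z / n0 \<le> 1" using r3 n0 by simp
      then have "(c3 z / n0) * c1 y \<le> 1 * X1" using r1 r3 n0 by (intro mult_mono) auto
      then have "cvh * ((c3 z / n0) * c1 y) \<le> cvh * X1" using pos by (intro mult_left_mono) auto
      then show ?thesis by (simp only: mult.assoc)
    qed
    have nn3: "chv * c2 y * (n0 - c3 z) \<ge> 0" for y z using r2 r3 pos by simp
    have X2b: "cvh * X1 - mh * X2 < 0" using pos n0 by (simp add: X2_def algebra_simps)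
    from T(2) consider "x1 T = 0" | "x1 T = X1" | "x2 T = B T" | "x2 T = X2" | "x3 T = B T" | "x3 T = n0"
      unfolding h_def by linarith
    then show False
    proof cases
      case 1
      show False
        apply (rule hit_low[OF d1[OF dT] DERIV_const[of 0] T(1)])
        using 1 bef cz pos by auto
    next
      case 2
      show False
        apply (rule hit_up[OF d1[OF dT] DERIV_const[of X1] T(1)])
        using 2 bef nn1[of "x3 T" "x1 T"] pos X1b by (auto simp: X1_def)
    next
      case 3
      show False
        apply (rule hit_up[OF dB d2[OF dT] T(1) 3[symmetric]])
        using bef apply blast
        using 3 nn1[of "x3 (T - tau)" "x1 (T - tau)"] kap Bpos[of T]
        by (simp add: algebra_simps) (smt (verit) mult_strict_right_mono)
    next
      case 4
      show False
        apply (rule hit_up[OF d2[OF dT] DERIV_const[of X2] T(1)])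
        using 4 bef nn2[of "x3 (T - tau)" "x1 (T - tau)"] X2b by auto
    next
      case 5
      show False
        apply (rule hit_up[OF dB d3[OF dT] T(1) 5[symmetric]])
        using bef apply blast
        using 5 nn3[of "x2 T" "x3 T"] kap Bpos[of T]
        by (simp add: algebra_simps) (smt (verit) mult_strict_right_mono)
    next
      case 6
      show False
        apply (rule hit_up[OF d3[OF dT] DERIV_const[of n0] T(1)])
        using 6 bef cn pos n0 by auto
    qed
  qed
  have inbox: "0 \<le> x1 t \<and> x1 t \<le> X1 \<and> 0 \<le> x2 t \<and> x2 t \<le> X2 \<and> 0 \<le> x3 t \<and> x3 t \<le> n0" if "t \<ge> -tau" for t
  proof -
    have "h t < 0" using box that by blast
    then show ?thesis unfolding h_def using Bpos[of t] by auto
  qed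
  have id1: "c1 (x1 t) = x1 t" if "t \<ge> -tau" for t unfolding c1_def using inbox[OF that] by (simp add: clamp_id)
  have id2: "c2 (x2 t) = x2 t" if "t \<ge> -tau" for t unfolding c2_def using inbox[OF that] by (simp add: clamp_id)
  have id3: "c3 (x3 t) = x3 t" if "t \<ge> -tau" for t unfolding c3_def using inbox[OF that] by (simp add: clamp_id)
  define Sv where "Sv t = n0 - x3 t" for t
  have sol: "dde_solution bh bv mh mv cvh chv tau x1 x2 Sv x3"
    unfolding dde_solution_def
  proof (intro conjI allI impI)
    show "continuous_on {- tau..} x1" "continuous_on {- tau..} x2" "continuous_on {- tau..} x3" by (fact xc')+
    show "continuous_on {- tau..} Sv" unfolding Sv_def using xc' by (intro continuous_intros)
    show "0 < Sv t + x3 t" for t using n0 by (simp add: Sv_def)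
    fix t :: real assume t: "0 \<le> t"
    have t1: "t \<ge> -tau" "t - tau \<ge> -tau" using t pos by auto
    show "(x1 has_real_derivative bh - cvh * (x3 t / (Sv t + x3 t)) * x1 t - mh * x1 t) (at t within {0..})"
      using d1[OF t] id1[OF t1(1)] id3[OF t1(1)] by (simp add: Sv_def)
    show "(x2 has_real_derivative cvh * (x3 (t - tau) / (Sv (t - tau) + x3 (t - tau))) * x1 (t - tau) - mh * x2 t) (at t within {0..})"
      using d2[OF t] id1[OF t1(2)] id3[OF t1(2)] by (simp add: Sv_def)
    show "(x3 has_real_derivative chv * x2 t * Sv t - mv * x3 t) (at t within {0..})"
      using d3[OF t] id2[OF t1(1)] id3[OF t1(1)] by (simp add: Sv_def)
    have "(Sv has_real_derivative 0 - (chv * x2 t * (n0 - x3 t) - mv * x3 t)) (at t within {0..})"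
      unfolding Sv_def using d3[OF t] id2[OF t1(1)] id3[OF t1(1)] by (intro DERIV_diff DERIV_const) simp
    moreover have "0 - (chv * x2 t * (n0 - x3 t) - mv * x3 t) = bv - chv * x2 t * Sv t - mv * Sv t"
      using pos by (simp add: Sv_def n0_def field_simps)
    ultimately show "(Sv has_real_derivative bv - chv * x2 t * Sv t - mv * Sv t) (at t within {0..})" by simp
  qed
  show ?thesis
  proof (intro exI conjI)
    show "dde_solution bh bv mh mv cvh chv tau x1 x2 Sv x3" by (rule sol)
    show "\<forall>\<theta>\<in>{- tau..0}. x1 \<theta> = bh / mh \<and> x2 \<theta> = eta \<and> Sv \<theta> = bv / mv - eta \<and> x3 \<theta> = eta"
      using hist by (simp add: Sv_def n0_def)
  qed
qed



lemma part2:
  fixes bh bv mh mv cvh chv tau :: real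
  assumes pos: "bh > 0" "bv > 0" "mh > 0" "mv > 0" "cvh > 0" "chv > 0" "tau \<ge> 0"
    and R: "cvh * chv * bh / (mh ^ 2 * mv) > 1"
  shows "\<not> E0_stable bh bv mh mv cvh chv tau"
proof
  assume st: "E0_stable bh bv mh mv cvh chv tau"
  define a where "a = cvh*bh*mv/(mh*bv)"
  define b where "b = chv*bv/mv"
  define c2 where "c2 = (mh/a + b/mv)/2"
  have apos: "a > 0" "b > 0" using pos by (auto simp: a_def b_def)
  have ab: "a * b > mh * mv"
  proof -
    have "cvh * chv * bh > mh ^ 2 * mv" using R pos by (simp add: less_divide_eq)
    moreover have "a * b = cvh * chv * bh / mh" using pos by (simp add: a_def b_def field_simps)
    ultimately show ?thesis using pos by (simp add: less_divide_eq power2_eq_square mult_ac)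
  qed
  have bm: "mh/a < b/mv" using ab apos pos by (simp add: divide_less_eq less_divide_eq mult.commute)
  have c1: "mh/a < c2" "c2 < b/mv" using mid[OF bm] unfolding c2_def by auto
  have "mh/a > 0" using apos pos by simp
  then have c2pos: "c2 > 0" using c1 by linarith
  define g1 where "g1 s = cvh * c2 * exp(-s*tau) * (bh/mh - s) - (mh + s) * (bv/mv + 2* s)" for s
  define g2 where "g2 s = chv * (bv/mv - s) - (mv + s) * c2" for s
  define g3 where "g3 s = bh/mh - s" for s
  define g4 where "g4 s = bv/mv - s" for s
  have g10: "g1 0 > 0"
  proof -
    have "mh < c2 * a" using c1 apos by (simp add: divide_less_eq)
    then have "mh * (bv/mv) < c2 * (cvh*bh*mv/(mh*bv)) * (bv/mv)" using pos unfolding a_def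
      by (intro mult_strict_right_mono) auto
    then have "mh * bv / mv < cvh * c2 * bh / mh" using pos by (simp add: field_simps)
    then show ?thesis by (simp add: g1_def)
  qed
  have g20: "g2 0 > 0"
  proof -
    have "mv * c2 < b" using c1 pos by (simp add: less_divide_eq mult.commute)
    then show ?thesis by (simp add: g2_def b_def)
  qed
  have g30: "g3 0 > 0" "g4 0 > 0" using pos by (simp_all add: g3_def g4_def)
  have i1: "isCont g1 0" unfolding g1_def by (intro continuous_intros)
  have i2: "isCont g2 0" unfolding g2_def by (intro continuous_intros)
  have i3: "isCont g3 0" unfolding g3_def by (intro continuous_intros)
  have i4: "isCont g4 0" unfolding g4_def by (intro continuous_intros)
  have "eventually (\<lambda>s. g1 s > 0 \<and> g2 s > 0 \<and> g3 s > 0 \<and> g4 s > 0) (at_right 0)"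
    by (intro eventually_conj ev_pos i1 i2 i3 i4 g10 g20 g30)
  then obtain s0 where s0: "s0 > 0" "\<forall>s>0. s < s0 \<longrightarrow> g1 s > 0 \<and> g2 s > 0 \<and> g3 s > 0 \<and> g4 s > 0"
    unfolding eventually_at_right_field by auto
  define s where "s = s0 / 2"
  have s: "s > 0" "g1 s > 0" "g2 s > 0" "g3 s > 0" "g4 s > 0" using s0 by (auto simp: s_def)
  obtain \<delta> where \<delta>: "\<delta> > 0" and stb: "\<forall>Sh Ih Sv Iv.
        dde_solution bh bv mh mv cvh chv tau Sh Ih Sv Iv \<and> history_in_Cplus tau Sh Ih Sv Iv \<and>
        (\<forall>\<theta>\<in>{-tau..0}. dev bh bv mh mv Sh Ih Sv Iv \<theta> < \<delta>)
        \<longrightarrow> (\<forall>t\<ge>0. dev bh bv mh mv Sh Ih Sv Iv t < s)"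
    using st s(1) unfolding E0_stable_def by blast
  define eta where "eta = min \<delta> (bv/mv) / 2"
  have "bv/mv > 0" using pos by simp
  then have "min \<delta> (bv/mv) > 0" "min \<delta> (bv/mv) \<le> \<delta>" "min \<delta> (bv/mv) \<le> bv/mv" using \<delta> by auto
  moreover have hm: "0 < m \<Longrightarrow> 0 < m/2 \<and> m/2 < m" for m :: real by (auto simp: field_simps)
  ultimately have "0 < eta" "eta < min \<delta> (bv/mv)" unfolding eta_def by blast+
  with \<open>min \<delta> (bv/mv) \<le> \<delta>\<close> \<open>min \<delta> (bv/mv) \<le> bv/mv\<close>
  have eta: "0 < eta" "eta < \<delta>" "eta < bv/mv" by linarith+
  obtain Sh Ih Sv Iv where sol: "dde_solution bh bv mh mv cvh chv tau Sh Ih Sv Iv"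
    and hist: "\<forall>\<theta>\<in>{-tau..0}. Sh \<theta> = bh/mh \<and> Ih \<theta> = eta \<and> Sv \<theta> = bv/mv - eta \<and> Iv \<theta> = eta"
    using sys_exists[OF pos eta(1,3)] by blast
  have hc: "history_in_Cplus tau Sh Ih Sv Iv"
    unfolding history_in_Cplus_def using hist eta pos by auto
  have hd: "\<forall>\<theta>\<in>{-tau..0}. dev bh bv mh mv Sh Ih Sv Iv \<theta> < \<delta>"
    unfolding dev_def using hist eta by auto
  have bound: "\<forall>t\<ge>0. dev bh bv mh mv Sh Ih Sv Iv t < s" using stb sol hc hd by blast
  define zeta where "zeta = eta / (2 * (1 + c2))"
  have zeta: "zeta > 0" using eta c2pos by (simp add: zeta_def)
  have z1: "zeta < eta" "c2 * zeta < eta"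
  proof -
    have "zeta * (2 * (1 + c2)) = eta" using c2pos by (simp add: zeta_def)
    then show "zeta < eta" "c2 * zeta < eta" using zeta c2pos by (auto simp: algebra_simps) (smt (verit) mult_pos_pos)+
  qed
  have ic: "\<forall>t\<ge>-tau. Ih t > zeta*exp(s*t) \<and> Iv t > c2*(zeta*exp(s*t))"
  proof (rule inst_core[OF pos s(1) _ _ _ zeta c2pos _ _ sol _ bound])
    show "s < bh/mh" using s(4) by (simp add: g3_def)
    show "s < bv/mv" using s(5) by (simp add: g4_def)
    show "0 \<le> s" using s by simp
    show "(mh + s) * (bv / mv + 2 * s) < cvh * c2 * exp (- s * tau) * (bh / mh - s)"
      using s(2) unfolding g1_def by linarith
    show "(mv + s) * c2 < chv * (bv / mv - s)" using s(3) unfolding g2_def by linarith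
    show "\<forall>\<theta>\<in>{- tau..0}. zeta * exp (s * \<theta>) < Ih \<theta> \<and> c2 * (zeta * exp (s * \<theta>)) < Iv \<theta> \<and>
            bh / mh - s \<le> Sh \<theta> \<and> Sv \<theta> + Iv \<theta> \<le> bv / mv + 2 * s"
    proof
      fix \<theta> assume th: "\<theta> \<in> {-tau..0}"
      have "s * \<theta> \<le> 0" using th s mult_nonneg_nonpos[of s \<theta>] by simp
      then have e1: "exp (s * \<theta>) \<le> 1" by simp
      have "zeta * exp (s * \<theta>) \<le> zeta" using e1 zeta by (simp add: mult_left_le)
      moreover have "c2 * (zeta * exp (s * \<theta>)) \<le> c2 * zeta"
        using \<open>zeta * exp (s * \<theta>) \<le> zeta\<close> c2pos by (intro mult_left_mono) auto
      ultimately show "zeta * exp (s * \<theta>) < Ih \<theta> \<and> c2 * (zeta * exp (s * \<theta>)) < Iv \<theta> \<and>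
            bh / mh - s \<le> Sh \<theta> \<and> Sv \<theta> + Iv \<theta> \<le> bv / mv + 2 * s"
        using hist th z1 s(1) by auto
    qed
  qed
  define T where "T = 1 / zeta"
  have T: "T \<ge> 0" using zeta by (simp add: T_def)
  have "Ih T > zeta * exp (s * T)" using ic T pos by auto
  moreover have "zeta * exp (s * T) \<ge> zeta * (1 + s * T)"
    using exp_ge_add_one_self[of "s * T"] zeta by (intro mult_left_mono) auto
  moreover have "zeta * (1 + s * T) = zeta + s" using zeta by (simp add: T_def field_simps)
  moreover have "\<bar>Ih T\<bar> < s" using bound T unfolding dev_def max_less_iff_conj by auto
  ultimately show False using zeta by linarith
qed

theorem theorem2:
  fixes bh bv mh mv cvh chv tau :: real
  assumes "bh > 0" "bv > 0" "mh > 0" "mv > 0" "cvh > 0" "chv > 0" "tau \<ge> 0"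
  defines "R0 \<equiv> sqrt (cvh * chv * bh / (mh ^ 2 * mv))"
  shows "(R0 < 1 \<longrightarrow> E0_LAS bh bv mh mv cvh chv tau) \<and>
         (R0 > 1 \<longrightarrow> \<not> E0_stable bh bv mh mv cvh chv tau)"
proof (intro conjI impI)
  assume "R0 < 1"
  then have "cvh * chv * bh / (mh ^ 2 * mv) < 1" unfolding R0_def by simp
  then show "E0_LAS bh bv mh mv cvh chv tau" by (rule part1[OF assms(1-7)])
next
  assume "R0 > 1"
  then have "sqrt 1 < sqrt (cvh * chv * bh / (mh ^ 2 * mv))" unfolding R0_def by simp
  then have "cvh * chv * bh / (mh ^ 2 * mv) > 1" by (simp only: real_sqrt_less_iff)
  then show "\<not> E0_stable bh bv mh mv cvh chv tau" by (rule part2[OF assms(1-7)])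
qed


end
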